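(* Let $\mathcal D$, $f(\cdot;\xi)$, $F$, $F^\star$ and the DiSK iteration (with SGD base update) be as described in the context, suppose Assumptions (A1)–(A3) hold, fix $\sigma_{\mathrm{DP}}^2>0$, and choose $C\ge\left(1+\frac{2(1-\kappa)}{\kappa}\right)G$. Take $\gamma=-1$ and $$M_\kappa=\frac{\|\nabla F(x_0)\|^2}{2L(F(x_0)-F^\star)}\le 1,$$ $$\eta=\min\left\{\frac{1}{L\left(2+4/M_\kappa-M_\kappa\right)},\ \frac{1}{M_\kappa L}\sqrt{\frac{2M_\kappa L(F(x_0)-F^\star)+\|\nabla F(x_0)\|^2}{2Td\sigma_{\mathrm{DP}}^2}}\right\},$$ $$\kappa=M_\kappa L\eta\le 1,\qquad \beta=\frac{\eta(1-\kappa)/2+\eta^2L(1-\kappa)^2(1+4\eta^2L^2)}{1-(1-\kappa)^2(1+4\eta^2L^2)}\le\frac{1}{2M_\kappa L},$$ $$B\ge\max\left\{1,\frac{2\sigma_{\mathrm{SGD}}^2}{d\sigma_{\mathrm{DP}}^2}\right\},$$ and suppose moreover that these satisfy $\eta<\frac{1+\kappa}{2L(1+4(1-\kappa)^2\beta L)}$, $\kappa>1-\frac{1}{\sqrt{1+4\eta^2L^2}}$ and $M_1:=(1+\kappa-2\eta L)-8(\beta+\eta^2L)(1-\kappa)^2L^2\eta>0$. If $$T\ge\frac{2L(F(x_0)-F^\star)\left(\frac{16}{M_\kappa^3}+\frac{16}{M_\kappa^2}-\frac{4}{M_\kappa}-4\right)+\|\nabla F(x_0)\|^2}{d\sigma_{\mathrm{DP}}^2},$$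 then after running $T$ iterations, $$\frac1T\sum_{t=0}^{T}\mathbb E\|\nabla F(x_t)\|^2\le 8\sqrt{\frac{M_\kappa L(F(x_0)-F^\star)d\sigma_{\mathrm{DP}}^2}{T}}.$$
   Context: Let $\mathcal D=\{\xi_1,\dots,\xi_N\}$ be a finite dataset, $f(\cdot;\xi):\mathbb R^d\to\mathbb R$ differentiable loss functions, $F(x)=\frac1N\sum_{\xi\in\mathcal D}f(x;\xi)$, and $F^\star=\inf_x F(x)$ (assumed finite, with $F(x_0)>F^\star$). For $v\in\mathbb R^d$, $\mathrm{clip}(v,C)=\min\{1,C/\|v\|\}\,v$. DiSK iteration with SGD base update, parameters $x_0\in\mathbb R^d$, step size $\eta>0$, $\gamma\neq0$, $\kappa\in(0,1]$, clipping threshold $C>0$, noise level $\sigma_{\mathrm{DP}}\ge0$, batch size $B\ge1$: initialize $\tilde g_{-1}=0$, $d_{-1}=0$; for $t=0,1,\dots$: draw a minibatch $\mathcal B_t$ of $B$ samples uniformly at random from $\mathcal D$ (independently of the past), set $a=\frac{1-\kappa}{\kappa\gamma}$ and $g_t=\frac1B\sum_{\xi\in\mathcal B_t}\mathrm{clip}\big(a\nabla f(x_t+\gamma d_{t-1};\xi)+(1-a)\nabla f(x_t;\xi),C\big)+w_t$ with $w_t\sim\mathcal N(0,\sigma_{\mathrm{DP}}^2I_d)$ independent of everything else; $\tilde g_t=(1-\kappa)\tilde g_{t-1}+\kappa g_t$; $x_{t+1}=x_t-\eta\tilde g_t$; $d_t=x_{t+1}-x_t$. Expectations are over all randomness. Assumptions: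 (A1) each $f(\cdot;\xi)$ is $L$-smooth: $\|\nabla f(x;\xi)-\nabla f(y;\xi)\|\le L\|x-y\|$ for all $x,y,\xi$; (A2) $\frac1N\sum_{\xi\in\mathcal D}\|\nabla f(x;\xi)-\nabla F(x)\|^2\le\sigma_{\mathrm{SGD}}^2$ for all $x$; (A3) $\|\nabla f(x;\xi)\|\le G$ for all $x,\xi$. *)

theory Defs
  imports "HOL-Probability.Probability"
begin

text \<open>Dataset indexed by {..<N}; vectors in R^d are real^'n with d = CARD('n).\<close>

definition clip :: "real^'n \<Rightarrow> real \<Rightarrow> real^'n" where
  "clip v C = min 1 (C / norm v) *\<^sub>R v"

definition Floss :: "nat \<Rightarrow> (nat \<Rightarrow> real^'n \<Rightarrow> real) \<Rightarrow> real^'n \<Rightarrow> real" where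
  "Floss N f x = (1 / real N) * (\<Sum>i<N. f i x)"

definition gradF :: "nat \<Rightarrow> (nat \<Rightarrow> real^'n \<Rightarrow> real^'n) \<Rightarrow> real^'n \<Rightarrow> real^'n" where
  "gradF N gf x = (1 / real N) *\<^sub>R (\<Sum>i<N. gf i x)"

definition Fstar :: "nat \<Rightarrow> (nat \<Rightarrow> real^'n \<Rightarrow> real) \<Rightarrow> real" where
  "Fstar N f = Inf (range (Floss N f))"

definition batch_space :: "nat \<Rightarrow> nat \<Rightarrow> (nat \<Rightarrow> nat) measure" where
  "batch_space N B = PiM {..<B} (\<lambda>_. measure_pmf (pmf_of_set {..<N}))"

definition gauss_space :: "real \<Rightarrow> ('n::finite \<Rightarrow> real) measure" where
  "gauss_space \<sigma> = PiM UNIV (\<lambda>_. density lborel (normal_density 0 \<sigma>))"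

definition step_space :: "nat \<Rightarrow> nat \<Rightarrow> real \<Rightarrow> ((nat \<Rightarrow> nat) \<times> ('n::finite \<Rightarrow> real)) measure" where
  "step_space N B \<sigma> = batch_space N B \<Otimes>\<^sub>M gauss_space \<sigma>"

definition omega_space :: "nat \<Rightarrow> nat \<Rightarrow> real \<Rightarrow> (nat \<Rightarrow> (nat \<Rightarrow> nat) \<times> ('n::finite \<Rightarrow> real)) measure" where
  "omega_space N B \<sigma> = PiM UNIV (\<lambda>_. step_space N B \<sigma>)"

text \<open>DiSK with SGD base update. State at time t: (x_t, gtilde_{t-1}, d_{t-1}).\<close>
fun disk_state :: "(nat \<Rightarrow> real^'n \<Rightarrow> real^'n) \<Rightarrow> real^'n \<Rightarrow> real \<Rightarrow> real \<Rightarrow> real \<Rightarrow> real \<Rightarrow> nat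
     \<Rightarrow> (nat \<Rightarrow> (nat \<Rightarrow> nat) \<times> ('n::finite \<Rightarrow> real)) \<Rightarrow> nat \<Rightarrow> (real^'n) \<times> (real^'n) \<times> (real^'n)" where
  "disk_state gf x0 \<eta> \<gamma> \<kappa> C B \<omega> 0 = (x0, 0, 0)"
| "disk_state gf x0 \<eta> \<gamma> \<kappa> C B \<omega> (Suc t) =
     (let (x, gt, dd) = disk_state gf x0 \<eta> \<gamma> \<kappa> C B \<omega> t;
          bat = fst (\<omega> t); w = snd (\<omega> t);
          a = (1 - \<kappa>) / (\<kappa> * \<gamma>);
          g = (1 / real B) *\<^sub>R (\<Sum>j<B. clip (a *\<^sub>R gf (bat j) (x + \<gamma> *\<^sub>R dd) + (1 - a) *\<^sub>R gf (bat j) x) C)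
              + (\<chi> k. w k);
          gt' = (1 - \<kappa>) *\<^sub>R gt + \<kappa> *\<^sub>R g;
          x' = x - \<eta> *\<^sub>R gt'
      in (x', gt', x' - x))"

definition disk_x where
  "disk_x gf x0 \<eta> \<gamma> \<kappa> C B \<omega> t = fst (disk_state gf x0 \<eta> \<gamma> \<kappa> C B \<omega> t)"

end

theory Submission
  imports Defs
begin


abbreviation NM :: "real \<Rightarrow> real measure" where "NM \<sigma> \<equiv> density lborel (normal_density 0 \<sigma>)"

lemma prob_fin: "prob_space M \<Longrightarrow> finite_measure M" by (simp add: prob_space_def)

lemma NM_prob: "\<sigma> > 0 \<Longrightarrow> prob_space (NM \<sigma>)"
  by (simp add: prob_space_normal_density)

lemma NM_m1: assumes "\<sigma> > 0" shows "integrable (NM \<sigma>) (\<lambda>x. x)" "integral\<^sup>L (NM \<sigma>) (\<lambda>x. x) = 0"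
proof -
  have h: "has_bochner_integral lborel (\<lambda>x. normal_density 0 \<sigma> x * (x - 0) ^ (2 * 0 + 1)) 0"
    using normal_moment_odd[OF assms] by blast
  have h': "has_bochner_integral lborel (\<lambda>x. normal_density 0 \<sigma> x *\<^sub>R x) 0"
    using h by simp
  show "integrable (NM \<sigma>) (\<lambda>x. x)"
    using h' by (subst integrable_density) (simp_all add: has_bochner_integral_iff)
  show "integral\<^sup>L (NM \<sigma>) (\<lambda>x. x) = 0"
    using h' by (subst integral_density) (auto dest: has_bochner_integral_integral_eq)
qed

lemma NM_m2: assumes "\<sigma> > 0" shows "integrable (NM \<sigma>) (\<lambda>x. x\<^sup>2)" "integral\<^sup>L (NM \<sigma>) (\<lambda>x. x\<^sup>2) = \<sigma>\<^sup>2"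
proof -
  have h: "has_bochner_integral lborel (\<lambda>x. normal_density 0 \<sigma> x * (x - 0) ^ (2 * 1)) (fact (2 * 1) / ((2 / \<sigma>\<^sup>2)^1 * fact 1))"
    using normal_moment_even[OF assms] by blast
  have h': "has_bochner_integral lborel (\<lambda>x. normal_density 0 \<sigma> x *\<^sub>R x\<^sup>2) (\<sigma>\<^sup>2)"
    using h assms by (simp add: fact_numeral)
  show "integrable (NM \<sigma>) (\<lambda>x. x\<^sup>2)"
    using h' by (subst integrable_density) (simp_all add: has_bochner_integral_iff)
  show "integral\<^sup>L (NM \<sigma>) (\<lambda>x. x\<^sup>2) = \<sigma>\<^sup>2"
    using h' by (subst integral_density) (auto dest: has_bochner_integral_integral_eq)
qed

lemma gauss_comp:
  fixes h :: "real \<Rightarrow> real"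
  assumes "\<sigma> > 0" "h \<in> borel_measurable borel"
  shows "integral\<^sup>L (gauss_space \<sigma> :: ('n::finite \<Rightarrow> real) measure) (\<lambda>w. h (w k)) = integral\<^sup>L (NM \<sigma>) h"
    and "integrable (gauss_space \<sigma> :: ('n::finite \<Rightarrow> real) measure) (\<lambda>w. h (w k)) = integrable (NM \<sigma>) h"
proof -
  have D: "distr (gauss_space \<sigma> :: ('n::finite \<Rightarrow> real) measure) (NM \<sigma>) (\<lambda>w. w k) = NM \<sigma>"
    unfolding gauss_space_def using assms by (intro distr_PiM_component) (auto simp: NM_prob)
  have m: "(\<lambda>w. w k) \<in> measurable (gauss_space \<sigma> :: ('n::finite \<Rightarrow> real) measure) (NM \<sigma>)"
    unfolding gauss_space_def by simp
  show "integral\<^sup>L (gauss_space \<sigma> :: ('n::finite \<Rightarrow> real) measure) (\<lambda>w. h (w k)) = integral\<^sup>L (NM \<sigma>) h"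
    by (subst D[symmetric], subst integral_distr[OF m]) (use assms in auto)
  show "integrable (gauss_space \<sigma> :: ('n::finite \<Rightarrow> real) measure) (\<lambda>w. h (w k)) = integrable (NM \<sigma>) h"
    by (subst D[symmetric], subst integrable_distr_eq[OF m]) (use assms in auto)
qed


definition vecw :: "('n::finite \<Rightarrow> real) \<Rightarrow> real^'n" where "vecw w = (\<chi> k. w k)"

lemma norm_sq_vec: "(norm (v :: real^'n::finite))\<^sup>2 = (\<Sum>k\<in>UNIV. (v$k)\<^sup>2)"
  by (simp only: power2_norm_eq_inner inner_vec_def) (simp add: power2_eq_square)

lemma gauss_norm:
  assumes s: "\<sigma> > 0"
  shows "integrable (gauss_space \<sigma> :: ('n::finite \<Rightarrow> real) measure) (\<lambda>w. (norm (a + c *\<^sub>R vecw w))\<^sup>2)"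
    and "integral\<^sup>L (gauss_space \<sigma> :: ('n::finite \<Rightarrow> real) measure) (\<lambda>w. (norm (a + c *\<^sub>R vecw w))\<^sup>2)
          = (norm a)\<^sup>2 + c\<^sup>2 * real CARD('n) * \<sigma>\<^sup>2"
proof -
  let ?G = "gauss_space \<sigma> :: ('n::finite \<Rightarrow> real) measure"
  have P: "prob_space (NM \<sigma>)" using s by (simp add: NM_prob)
  have PS: "measure (NM \<sigma>) UNIV = 1" using prob_space.prob_space[OF P] by simp
  have PF: "finite_measure (NM \<sigma>)" using P by (simp add: prob_space_def)
  define h where "h k = (\<lambda>x::real. (a$k)\<^sup>2 + (2 * c * a$k) * x + c\<^sup>2 * x\<^sup>2)" for k
  have eq: "(\<lambda>w. (norm (a + c *\<^sub>R vecw w))\<^sup>2) = (\<lambda>w. \<Sum>k\<in>UNIV. h k (w k))"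
    by (rule ext, simp only: norm_sq_vec, simp add: vecw_def h_def power2_eq_square algebra_simps)
  have hm: "h k \<in> borel_measurable borel" for k unfolding h_def by measurable
  have hi: "integrable (NM \<sigma>) (h k)" for k
    unfolding h_def
    by (rule Bochner_Integration.integrable_add[OF Bochner_Integration.integrable_add[OF finite_measure.integrable_const[OF PF] Bochner_Integration.integrable_mult_right[OF NM_m1(1)[OF s]]] Bochner_Integration.integrable_mult_right[OF NM_m2(1)[OF s]]])
  have hv: "integral\<^sup>L (NM \<sigma>) (h k) = (a$k)\<^sup>2 + c\<^sup>2 * \<sigma>\<^sup>2" for k
  proof -
    have "integral\<^sup>L (NM \<sigma>) (h k) = integral\<^sup>L (NM \<sigma>) (\<lambda>x. (a$k)\<^sup>2) + integral\<^sup>L (NM \<sigma>) (\<lambda>x. (2 * c * a$k) * x) + integral\<^sup>L (NM \<sigma>) (\<lambda>x. c\<^sup>2 * x\<^sup>2)"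
      unfolding h_def using NM_m1[OF s] NM_m2[OF s] finite_measure.integrable_const[OF PF]
      by (subst Bochner_Integration.integral_add, auto intro!: Bochner_Integration.integrable_add)+
    also have "\<dots> = (a$k)\<^sup>2 + c\<^sup>2 * \<sigma>\<^sup>2"
      using NM_m1[OF s] NM_m2[OF s] P by (simp add: PS lebesgue_integral_const)
    finally show ?thesis .
  qed
  have gi: "integrable ?G (\<lambda>w. h k (w k))" for k
    using gauss_comp(2)[OF s hm, of k] hi by simp
  show "integrable ?G (\<lambda>w. (norm (a + c *\<^sub>R vecw w))\<^sup>2)"
    unfolding eq using gi by (intro Bochner_Integration.integrable_sum) auto
  have "integral\<^sup>L ?G (\<lambda>w. (norm (a + c *\<^sub>R vecw w))\<^sup>2) = (\<Sum>k\<in>UNIV. integral\<^sup>L ?G (\<lambda>w. h k (w k)))"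
    unfolding eq using gi by (intro Bochner_Integration.integral_sum) auto
  also have "\<dots> = (\<Sum>k\<in>UNIV. (a$k)\<^sup>2 + c\<^sup>2 * \<sigma>\<^sup>2)"
    by (intro sum.cong refl, subst gauss_comp(1)[OF s hm]) (rule hv)
  also have "\<dots> = (norm a)\<^sup>2 + c\<^sup>2 * real CARD('n) * \<sigma>\<^sup>2"
    by (simp add: sum.distrib norm_sq_vec)
  finally show "integral\<^sup>L ?G (\<lambda>w. (norm (a + c *\<^sub>R vecw w))\<^sup>2) = (norm a)\<^sup>2 + c\<^sup>2 * real CARD('n) * \<sigma>\<^sup>2" .
qed


abbreviation UP :: "nat \<Rightarrow> nat pmf" where "UP N \<equiv> pmf_of_set {..<N}"

lemma UP_integral: "N \<ge> 1 \<Longrightarrow> integral\<^sup>L (measure_pmf (UP N)) (f :: nat \<Rightarrow> real) = (\<Sum>i<N. f i) / real N"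
  by (subst integral_pmf_of_set) (auto simp: lessThan_empty_iff)

lemma psf_UP: "product_sigma_finite (\<lambda>_::nat. measure_pmf (UP N))"
  unfolding product_sigma_finite_def by (auto intro: prob_space_imp_sigma_finite prob_space_measure_pmf)

lemma sum_sq_shift:
  fixes u :: "nat \<Rightarrow> real^'n::finite"
  assumes N: "N \<ge> 1" and z: "(\<Sum>i<N. u i) = 0"
  shows "(\<Sum>i<N. (norm (c + s *\<^sub>R u i))\<^sup>2) / real N = (norm c)\<^sup>2 + s\<^sup>2 * ((\<Sum>i<N. (norm (u i))\<^sup>2) / real N)"
proof -
  have "(\<Sum>i<N. (norm (c + s *\<^sub>R u i))\<^sup>2) = (\<Sum>i<N. (norm c)\<^sup>2 + 2 * s * inner c (u i) + s\<^sup>2 * (norm (u i))\<^sup>2)"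
    by (intro sum.cong refl) (simp only: power2_norm_eq_inner, simp add: inner_add_left inner_add_right inner_commute power2_eq_square algebra_simps)
  also have "\<dots> = real N * (norm c)\<^sup>2 + 2 * s * inner c (\<Sum>i<N. u i) + s\<^sup>2 * (\<Sum>i<N. (norm (u i))\<^sup>2)"
    by (simp add: sum.distrib inner_sum_right sum_distrib_left)
  finally show ?thesis using N z by (simp add: field_simps)
qed

lemma batch_norm:
  fixes u :: "nat \<Rightarrow> real^'n::finite" and J :: "nat set"
  assumes N: "N \<ge> 1" and J: "finite J" and z: "(\<Sum>i<N. u i) = 0" and U: "\<And>i. norm (u i) \<le> U"
  shows "integrable (PiM J (\<lambda>_. measure_pmf (UP N))) (\<lambda>b. (norm (a + s *\<^sub>R (\<Sum>j\<in>J. u (b j))))\<^sup>2)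
       \<and> integral\<^sup>L (PiM J (\<lambda>_. measure_pmf (UP N))) (\<lambda>b. (norm (a + s *\<^sub>R (\<Sum>j\<in>J. u (b j))))\<^sup>2)
         = (norm a)\<^sup>2 + s\<^sup>2 * real (card J) * ((\<Sum>i<N. (norm (u i))\<^sup>2) / real N)"
  using J
proof (induction J arbitrary: a rule: finite_induct)
  case empty
  then show ?case by (simp add: PiM_empty integrable_count_space)
next
  case (insert j J)
  let ?M = "\<lambda>_::nat. measure_pmf (UP N)"
  let ?m2 = "(\<Sum>i<N. (norm (u i))\<^sup>2) / real N"
  interpret PSF: product_sigma_finite ?M by (rule psf_UP)
  have PF: "finite_measure (PiM (insert j J) ?M)"
    by (intro prob_fin prob_space_PiM) (auto intro: prob_space_measure_pmf)
  have mc: "(\<lambda>b. u (b i)) \<in> borel_measurable (PiM K ?M)" if "i \<in> K" for i K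
    by (rule measurable_compose[OF measurable_component_singleton[OF that]]) simp
  have meas: "(\<lambda>b. (norm (a + s *\<^sub>R (\<Sum>i\<in>insert j J. u (b i))))\<^sup>2) \<in> borel_measurable (PiM (insert j J) ?M)"
    using mc by measurable
  have bnd: "norm ((norm (a + s *\<^sub>R (\<Sum>i\<in>insert j J. u (b i))))\<^sup>2) \<le> (norm a + \<bar>s\<bar> * (real (card (insert j J)) * U))\<^sup>2" for b
  proof -
    have "norm (\<Sum>i\<in>insert j J. u (b i)) \<le> (\<Sum>i\<in>insert j J. norm (u (b i)))" by (rule norm_sum)
    also have "\<dots> \<le> (\<Sum>i\<in>insert j J. U)" by (intro sum_mono U)
    finally have s1: "norm (\<Sum>i\<in>insert j J. u (b i)) \<le> real (card (insert j J)) * U" by simp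
    have "norm (a + s *\<^sub>R (\<Sum>i\<in>insert j J. u (b i))) \<le> norm a + \<bar>s\<bar> * norm (\<Sum>i\<in>insert j J. u (b i))"
      by (metis norm_scaleR norm_triangle_ineq real_norm_def)
    also have "\<dots> \<le> norm a + \<bar>s\<bar> * (real (card (insert j J)) * U)"
      using s1 by (simp add: mult_left_mono)
    finally show ?thesis by (simp add: power_mono)
  qed
  have int: "integrable (PiM (insert j J) ?M) (\<lambda>b. (norm (a + s *\<^sub>R (\<Sum>i\<in>insert j J. u (b i))))\<^sup>2)"
    using bnd by (intro finite_measure.integrable_const_bound[OF PF _ meas]) auto
  have "integral\<^sup>L (PiM (insert j J) ?M) (\<lambda>b. (norm (a + s *\<^sub>R (\<Sum>i\<in>insert j J. u (b i))))\<^sup>2)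
     = (\<integral>x. (\<integral>y. (norm (a + s *\<^sub>R (\<Sum>i\<in>insert j J. u ((x(j:=y)) i))))\<^sup>2 \<partial>?M j) \<partial>PiM J ?M)"
    by (rule PSF.product_integral_insert[OF insert(1,2) int])
  also have "\<dots> = (\<integral>x. (norm (a + s *\<^sub>R (\<Sum>i\<in>J. u (x i))))\<^sup>2 + s\<^sup>2 * ?m2 \<partial>PiM J ?M)"
  proof (intro Bochner_Integration.integral_cong refl)
    fix x
    have e: "(\<Sum>i\<in>insert j J. u ((x(j:=y)) i)) = u y + (\<Sum>i\<in>J. u (x i))" for y
      using insert(1,2) by (auto intro!: sum.cong simp: sum.insert)
    show "(\<integral>y. (norm (a + s *\<^sub>R (\<Sum>i\<in>insert j J. u ((x(j:=y)) i))))\<^sup>2 \<partial>?M j)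
        = (norm (a + s *\<^sub>R (\<Sum>i\<in>J. u (x i))))\<^sup>2 + s\<^sup>2 * ?m2"
      unfolding e UP_integral[OF N]
      using sum_sq_shift[OF N z, of "a + s *\<^sub>R (\<Sum>i\<in>J. u (x i))" s]
      by (simp add: algebra_simps)
  qed
  also have "\<dots> = (norm a)\<^sup>2 + s\<^sup>2 * real (card J) * ?m2 + s\<^sup>2 * ?m2"
  proof -
    have PJ: "prob_space (PiM J ?M)" by (intro prob_space_PiM) (auto intro: prob_space_measure_pmf)
    show ?thesis
      using insert(3)[of a] finite_measure.integrable_const[OF prob_fin[OF PJ]] prob_space.prob_space[OF PJ]
      by (subst Bochner_Integration.integral_add) (auto simp: lebesgue_integral_const)
  qed
  also have "\<dots> = (norm a)\<^sup>2 + s\<^sup>2 * real (card (insert j J)) * ?m2"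
    using insert(1,2) by (simp add: algebra_simps)
  finally show ?case using int by simp
qed


lemma Floss_deriv:
  fixes f :: "nat \<Rightarrow> real^'n::finite \<Rightarrow> real"
  assumes grad: "\<And>i x. i < N \<Longrightarrow> GDERIV (f i) x :> gf i x"
  shows "((Floss N f) has_derivative (\<lambda>h. inner h (gradF N gf x))) (at x)"
proof -
  have "((\<lambda>y. \<Sum>i<N. f i y) has_derivative (\<lambda>h. \<Sum>i<N. inner h (gf i x))) (at x)"
    using grad by (intro has_derivative_sum) (auto simp: gderiv_def)
  then have "((\<lambda>y. (1 / real N) * (\<Sum>i<N. f i y)) has_derivative (\<lambda>h. (1 / real N) * (\<Sum>i<N. inner h (gf i x)))) (at x)"
    by (intro has_derivative_mult_right)
  moreover have "(\<lambda>h. (1 / real N) * (\<Sum>i<N. inner h (gf i x))) = (\<lambda>h. inner h (gradF N gf x))"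
    by (rule ext) (simp add: gradF_def inner_sum_right)
  ultimately show ?thesis unfolding Floss_def by simp
qed

lemma gradF_lip:
  fixes gf :: "nat \<Rightarrow> real^'n::finite \<Rightarrow> real^'n"
  assumes N: "N \<ge> 1" and A1: "\<And>i x y. i < N \<Longrightarrow> norm (gf i x - gf i y) \<le> L * norm (x - y)"
  shows "norm (gradF N gf x - gradF N gf y) \<le> L * norm (x - y)"
proof -
  have "gradF N gf x - gradF N gf y = (1 / real N) *\<^sub>R (\<Sum>i<N. gf i x - gf i y)"
    by (simp add: gradF_def sum_subtractf scaleR_diff_right)
  then have "norm (gradF N gf x - gradF N gf y) = (1 / real N) * norm (\<Sum>i<N. gf i x - gf i y)"
    by simp
  also have "\<dots> \<le> (1 / real N) * (\<Sum>i<N. norm (gf i x - gf i y))"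
    by (intro mult_left_mono norm_sum) auto
  also have "\<dots> \<le> (1 / real N) * (\<Sum>i<N. L * norm (x - y))"
    by (intro mult_left_mono sum_mono A1) auto
  also have "\<dots> = L * norm (x - y)" using N by simp
  finally show ?thesis .
qed

lemma descent:
  fixes F :: "real^'n::finite \<Rightarrow> real"
  assumes D: "\<And>x. (F has_derivative (\<lambda>h. inner h (DF x))) (at x)"
    and lip: "\<And>x y. norm (DF x - DF y) \<le> L * norm (x - y)" and L: "L \<ge> 0"
  shows "F y \<le> F x + inner (DF x) (y - x) + L * (norm (y - x))\<^sup>2"
proof -
  define h where "h = y - x"
  define \<phi> where "\<phi> s = F (x + s *\<^sub>R h)" for s :: real
  have d\<phi>: "(\<phi> has_derivative (\<lambda>t. t * inner h (DF (x + s *\<^sub>R h)))) (at s within {0..1})" for s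
  proof -
    have "((\<lambda>s. x + s *\<^sub>R h) has_derivative (\<lambda>t. t *\<^sub>R h)) (at s within {0..1})"
      by (auto intro!: derivative_eq_intros)
    from has_derivative_compose[OF this has_derivative_at_withinI[OF D[of "x + s *\<^sub>R h"]]]
    show ?thesis unfolding \<phi>_def by (simp add: inner_commute)
  qed
  obtain s where s: "s \<in> {0<..<1}" "\<phi> 1 - \<phi> 0 = (1 - 0) * inner h (DF (x + s *\<^sub>R h))"
    using mvt_simple[of 0 1 \<phi> "\<lambda>s t. t * inner h (DF (x + s *\<^sub>R h))"] d\<phi> by auto
  have "inner h (DF (x + s *\<^sub>R h)) - inner h (DF x) = inner h (DF (x + s *\<^sub>R h) - DF x)"
    by (simp add: inner_diff_right)
  also have "\<dots> \<le> norm h * norm (DF (x + s *\<^sub>R h) - DF x)"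
    by (rule norm_cauchy_schwarz)
  also have "\<dots> \<le> norm h * (L * norm (s *\<^sub>R h))"
    using lip[of "x + s *\<^sub>R h" x] by (intro mult_left_mono) auto
  also have "\<dots> \<le> norm h * (L * norm h)"
  proof -
    have "s * norm h \<le> 1 * norm h" using s by (intro mult_right_mono) auto
    then show ?thesis using s L by (intro mult_left_mono) (auto intro!: mult_left_mono)
  qed
  finally have "inner h (DF (x + s *\<^sub>R h)) \<le> inner h (DF x) + L * (norm h)\<^sup>2"
    by (simp add: power2_eq_square algebra_simps)
  with s show ?thesis unfolding \<phi>_def h_def by (simp add: inner_commute)
qed

lemma var_le:
  fixes y :: "nat \<Rightarrow> real^'n::finite"
  assumes N: "N \<ge> 1"
  shows "(\<Sum>i<N. (norm (y i - (1 / real N) *\<^sub>R (\<Sum>k<N. y k)))\<^sup>2) \<le> (\<Sum>i<N. (norm (y i))\<^sup>2)"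
proof -
  define m where "m = (1 / real N) *\<^sub>R (\<Sum>k<N. y k)"
  have sm: "(\<Sum>k<N. y k) = real N *\<^sub>R m" using N by (simp add: m_def)
  have "(\<Sum>i<N. (norm (y i - m))\<^sup>2) = (\<Sum>i<N. (norm (y i))\<^sup>2 - 2 * inner (y i) m + (norm m)\<^sup>2)"
    by (intro sum.cong refl) (simp only: power2_norm_eq_inner, simp add: inner_diff_left inner_diff_right inner_commute)
  also have "\<dots> = (\<Sum>i<N. (norm (y i))\<^sup>2) - 2 * inner (\<Sum>k<N. y k) m + real N * (norm m)\<^sup>2"
    by (simp add: sum.distrib sum_subtractf inner_sum_left sum_distrib_left)
  also have "\<dots> = (\<Sum>i<N. (norm (y i))\<^sup>2) - real N * (norm m)\<^sup>2"
    unfolding sm by (simp add: power2_norm_eq_inner)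
  also have "\<dots> \<le> (\<Sum>i<N. (norm (y i))\<^sup>2)" by simp
  finally show ?thesis unfolding m_def .
qed


definition dstep :: "(nat \<Rightarrow> real^'n \<Rightarrow> real^'n) \<Rightarrow> real \<Rightarrow> real \<Rightarrow> real \<Rightarrow> real \<Rightarrow> nat
     \<Rightarrow> (real^'n) \<times> (real^'n) \<times> (real^'n) \<Rightarrow> (nat \<Rightarrow> nat) \<times> ('n::finite \<Rightarrow> real) \<Rightarrow> (real^'n) \<times> (real^'n) \<times> (real^'n)" where
  "dstep gf \<eta> \<gamma> \<kappa> C B st z =
     (let (x, gt, dd) = st;
          bat = fst z; w = snd z;
          a = (1 - \<kappa>) / (\<kappa> * \<gamma>);
          g = (1 / real B) *\<^sub>R (\<Sum>j<B. clip (a *\<^sub>R gf (bat j) (x + \<gamma> *\<^sub>R dd) + (1 - a) *\<^sub>R gf (bat j) x) C)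
              + (\<chi> k. w k);
          gt' = (1 - \<kappa>) *\<^sub>R gt + \<kappa> *\<^sub>R g;
          x' = x - \<eta> *\<^sub>R gt'
      in (x', gt', x' - x))"

fun run :: "(nat \<Rightarrow> real^'n \<Rightarrow> real^'n) \<Rightarrow> real \<Rightarrow> real \<Rightarrow> real \<Rightarrow> real \<Rightarrow> nat
     \<Rightarrow> (real^'n) \<times> (real^'n) \<times> (real^'n) \<Rightarrow> (nat \<Rightarrow> (nat \<Rightarrow> nat) \<times> ('n::finite \<Rightarrow> real)) \<Rightarrow> nat \<Rightarrow> (real^'n) \<times> (real^'n) \<times> (real^'n)" where
  "run gf \<eta> \<gamma> \<kappa> C B st \<omega> 0 = st"
| "run gf \<eta> \<gamma> \<kappa> C B st \<omega> (Suc t) = dstep gf \<eta> \<gamma> \<kappa> C B (run gf \<eta> \<gamma> \<kappa> C B st \<omega> t) (\<omega> t)"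

lemma disk_state_run: "disk_state gf x0 \<eta> \<gamma> \<kappa> C B \<omega> t = run gf \<eta> \<gamma> \<kappa> C B (x0, 0, 0) \<omega> t"
  by (induction t) (simp_all add: dstep_def)

lemma run_case_nat: "run gf \<eta> \<gamma> \<kappa> C B st (case_nat z \<omega>) (Suc n) = run gf \<eta> \<gamma> \<kappa> C B (dstep gf \<eta> \<gamma> \<kappa> C B st z) \<omega> n"
  by (induction n) simp_all

lemma vecw_meas: "(vecw :: ('n::finite \<Rightarrow> real) \<Rightarrow> real^'n) \<in> borel_measurable (gauss_space \<sigma>)"
proof (subst borel_measurable_euclidean_space, intro ballI)
  fix i :: "real^'n" assume "i \<in> Basis"
  then obtain k where k: "i = axis k 1" by (auto simp: Basis_vec_def)
  have "(\<lambda>w::'n \<Rightarrow> real. w k) \<in> borel_measurable (gauss_space \<sigma>)"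
    unfolding gauss_space_def by measurable
  then show "(\<lambda>x. vecw x \<bullet> i) \<in> borel_measurable (gauss_space \<sigma>)"
    by (simp add: k vecw_def inner_axis)
qed

lemma clip_meas[measurable]: "(\<lambda>v. clip v C) \<in> borel_measurable borel"
  unfolding clip_def by measurable


lemma bat_meas:
  assumes Z: "Z \<in> measurable M (step_space N B \<sigma>)" and j: "j < B"
  shows "(\<lambda>\<omega>. fst (Z \<omega>) j) \<in> measurable M (count_space UNIV)"
proof -
  have "(\<lambda>\<omega>. fst (Z \<omega>)) \<in> measurable M (batch_space N B)"
    using Z unfolding step_space_def by (rule measurable_compose[OF _ measurable_fst])
  then have "(\<lambda>\<omega>. fst (Z \<omega>) j) \<in> measurable M (measure_pmf (pmf_of_set {..<N}))"
    unfolding batch_space_def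
    by (rule measurable_compose[OF _ measurable_component_singleton]) (use j in auto)
  then show ?thesis by simp
qed

lemma w_meas:
  assumes Z: "Z \<in> measurable M (step_space N B \<sigma>)"
  shows "(\<lambda>\<omega>. (\<chi> k. snd (Z \<omega>) k) :: real^'n::finite) \<in> borel_measurable M"
proof -
  have "(\<lambda>\<omega>. snd (Z \<omega>)) \<in> measurable M (gauss_space \<sigma> :: ('n \<Rightarrow> real) measure)"
    using Z unfolding step_space_def by (rule measurable_compose[OF _ measurable_snd])
  from measurable_compose[OF this vecw_meas] show ?thesis by (simp add: vecw_def)
qed

lemma gfbat_meas:
  assumes gm: "\<And>i. gf i \<in> borel_measurable borel" and y: "y \<in> borel_measurable M"
    and Z: "Z \<in> measurable M (step_space N B \<sigma>)" and j: "j < B"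
  shows "(\<lambda>\<omega>. gf (fst (Z \<omega>) j) (y \<omega>)) \<in> borel_measurable M"
  by (rule measurable_compose_countable[where f="\<lambda>i \<omega>. gf i (y \<omega>)", OF _ bat_meas[OF Z j]])
     (rule measurable_compose[OF y gm])

lemma dstep_meas:
  fixes gf :: "nat \<Rightarrow> real^'n::finite \<Rightarrow> real^'n"
  assumes gm: "\<And>i. gf i \<in> borel_measurable borel"
    and X: "x \<in> borel_measurable M" "gt \<in> borel_measurable M" "dd \<in> borel_measurable M"
    and Z: "Z \<in> measurable M (step_space N B \<sigma>)"
  shows "(\<lambda>\<omega>. fst (dstep gf \<eta> \<gamma> \<kappa> C B (x \<omega>, gt \<omega>, dd \<omega>) (Z \<omega>))) \<in> borel_measurable M"
    "(\<lambda>\<omega>. fst (snd (dstep gf \<eta> \<gamma> \<kappa> C B (x \<omega>, gt \<omega>, dd \<omega>) (Z \<omega>)))) \<in> borel_measurable M"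
    "(\<lambda>\<omega>. snd (snd (dstep gf \<eta> \<gamma> \<kappa> C B (x \<omega>, gt \<omega>, dd \<omega>) (Z \<omega>)))) \<in> borel_measurable M"
proof -
  let ?a = "(1 - \<kappa>) / (\<kappa> * \<gamma>)"
  have g1: "(\<lambda>\<omega>. gf (fst (Z \<omega>) j) (x \<omega> + \<gamma> *\<^sub>R dd \<omega>)) \<in> borel_measurable M" if "j < B" for j
    by (rule gfbat_meas[OF gm _ Z that]) (use X in measurable)
  have g2: "(\<lambda>\<omega>. gf (fst (Z \<omega>) j) (x \<omega>)) \<in> borel_measurable M" if "j < B" for j
    by (rule gfbat_meas[OF gm X(1) Z that])
  have c: "(\<lambda>\<omega>. clip (?a *\<^sub>R gf (fst (Z \<omega>) j) (x \<omega> + \<gamma> *\<^sub>R dd \<omega>) + (1 - ?a) *\<^sub>R gf (fst (Z \<omega>) j) (x \<omega>)) C) \<in> borel_measurable M" if "j < B" for j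
    using g1[OF that] g2[OF that] by measurable
  have s: "(\<lambda>\<omega>. \<Sum>j<B. clip (?a *\<^sub>R gf (fst (Z \<omega>) j) (x \<omega> + \<gamma> *\<^sub>R dd \<omega>) + (1 - ?a) *\<^sub>R gf (fst (Z \<omega>) j) (x \<omega>)) C) \<in> borel_measurable M"
    using c by (intro borel_measurable_sum) auto
  have gt': "(\<lambda>\<omega>. (1 - \<kappa>) *\<^sub>R gt \<omega> + \<kappa> *\<^sub>R ((1 / real B) *\<^sub>R (\<Sum>j<B. clip (?a *\<^sub>R gf (fst (Z \<omega>) j) (x \<omega> + \<gamma> *\<^sub>R dd \<omega>) + (1 - ?a) *\<^sub>R gf (fst (Z \<omega>) j) (x \<omega>)) C) + (\<chi> k. snd (Z \<omega>) k))) \<in> borel_measurable M"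
    using s w_meas[OF Z] X by measurable
  show "(\<lambda>\<omega>. fst (snd (dstep gf \<eta> \<gamma> \<kappa> C B (x \<omega>, gt \<omega>, dd \<omega>) (Z \<omega>)))) \<in> borel_measurable M"
    using gt' by (simp add: dstep_def Let_def)
  show "(\<lambda>\<omega>. fst (dstep gf \<eta> \<gamma> \<kappa> C B (x \<omega>, gt \<omega>, dd \<omega>) (Z \<omega>))) \<in> borel_measurable M"
    using gt' X by (simp add: dstep_def Let_def)
  show "(\<lambda>\<omega>. snd (snd (dstep gf \<eta> \<gamma> \<kappa> C B (x \<omega>, gt \<omega>, dd \<omega>) (Z \<omega>)))) \<in> borel_measurable M"
    using gt' X by (simp add: dstep_def Let_def)
qed

lemma run_meas:
  fixes gf :: "nat \<Rightarrow> real^'n::finite \<Rightarrow> real^'n"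
  assumes gm: "\<And>i. gf i \<in> borel_measurable borel"
  shows "(\<lambda>\<omega>. fst (run gf \<eta> \<gamma> \<kappa> C B st \<omega> t)) \<in> borel_measurable (omega_space N B \<sigma>)
       \<and> (\<lambda>\<omega>. fst (snd (run gf \<eta> \<gamma> \<kappa> C B st \<omega> t))) \<in> borel_measurable (omega_space N B \<sigma>)
       \<and> (\<lambda>\<omega>. snd (snd (run gf \<eta> \<gamma> \<kappa> C B st \<omega> t))) \<in> borel_measurable (omega_space N B \<sigma>)"
proof (induction t)
  case 0
  then show ?case by simp
next
  case (Suc t)
  have Z: "(\<lambda>\<omega>. \<omega> t) \<in> measurable (omega_space N B \<sigma>) (step_space N B \<sigma> :: ((nat \<Rightarrow> nat) \<times> ('n \<Rightarrow> real)) measure)"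
    unfolding omega_space_def by simp
  have e: "run gf \<eta> \<gamma> \<kappa> C B st \<omega> t = (fst (run gf \<eta> \<gamma> \<kappa> C B st \<omega> t), fst (snd (run gf \<eta> \<gamma> \<kappa> C B st \<omega> t)), snd (snd (run gf \<eta> \<gamma> \<kappa> C B st \<omega> t)))" for \<omega>
    by simp
  show ?case
    using dstep_meas[OF gm Suc.IH[THEN conjunct1] Suc.IH[THEN conjunct2, THEN conjunct1] Suc.IH[THEN conjunct2, THEN conjunct2] Z, where \<eta>=\<eta> and \<gamma>=\<gamma> and \<kappa>=\<kappa> and C=C]
    by (simp del: prod.collapse add: e[symmetric])
qed


lemma omega_split:
  fixes S :: "'a measure" and H :: "(nat \<Rightarrow> 'a) \<Rightarrow> ennreal"
  assumes P: "prob_space S" and H: "H \<in> borel_measurable (PiM UNIV (\<lambda>_::nat. S))"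
  shows "(\<integral>\<^sup>+\<omega>. H \<omega> \<partial>PiM UNIV (\<lambda>_::nat. S)) = (\<integral>\<^sup>+z. (\<integral>\<^sup>+\<omega>. H (case_nat z \<omega>) \<partial>PiM UNIV (\<lambda>_::nat. S)) \<partial>S)"
proof -
  interpret SS: sequence_space S
    unfolding sequence_space_def product_prob_space_def product_prob_space_axioms_def product_sigma_finite_def
    using P by (auto intro: prob_space_imp_sigma_finite)
  have PO: "prob_space (PiM UNIV (\<lambda>_::nat. S))" by (rule prob_space_PiM) (use P in auto)
  interpret PSF: pair_sigma_finite S "PiM UNIV (\<lambda>_::nat. S)"
    unfolding pair_sigma_finite_def using P PO by (auto intro: prob_space_imp_sigma_finite)
  have m: "(\<lambda>(s, \<omega>). case_nat s \<omega>) \<in> measurable (S \<Otimes>\<^sub>M PiM UNIV (\<lambda>_::nat. S)) (PiM UNIV (\<lambda>_::nat. S))"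
    by measurable
  have "(\<integral>\<^sup>+\<omega>. H \<omega> \<partial>PiM UNIV (\<lambda>_::nat. S)) = (\<integral>\<^sup>+\<omega>. H \<omega> \<partial>distr (S \<Otimes>\<^sub>M PiM UNIV (\<lambda>_::nat. S)) (PiM UNIV (\<lambda>_::nat. S)) (\<lambda>(s, \<omega>). case_nat s \<omega>))"
    by (simp add: SS.PiM_iter)
  also have "\<dots> = (\<integral>\<^sup>+p. H (case_prod case_nat p) \<partial>(S \<Otimes>\<^sub>M PiM UNIV (\<lambda>_::nat. S)))"
    by (rule nn_integral_distr[OF m]) (simp add: H)
  also have "\<dots> = (\<integral>\<^sup>+z. (\<integral>\<^sup>+\<omega>. H (case_nat z \<omega>) \<partial>PiM UNIV (\<lambda>_::nat. S)) \<partial>S)"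
    using sigma_finite_measure.nn_integral_fst[OF prob_space_imp_sigma_finite[OF PO] measurable_compose[OF m H]] by simp
  finally show ?thesis .
qed

lemma step_prob: "\<sigma> > 0 \<Longrightarrow> N \<ge> 1 \<Longrightarrow> prob_space (step_space N B \<sigma> :: ((nat \<Rightarrow> nat) \<times> ('n::finite \<Rightarrow> real)) measure)"
  unfolding step_space_def batch_space_def gauss_space_def
  by (intro prob_space_pair prob_space_PiM) (auto simp: NM_prob intro: prob_space_measure_pmf)


definition gq :: "nat \<Rightarrow> (nat \<Rightarrow> real^'n::finite \<Rightarrow> real^'n) \<Rightarrow> nat \<Rightarrow> real^'n \<Rightarrow> real^'n" where
  "gq N gf i x = (if i < N then gf i x else 0)"

lemma gradF_gq: "gradF N (gq N gf) = gradF N gf"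
  by (rule ext) (simp add: gradF_def gq_def)

lemma clip_id: "norm v \<le> C \<Longrightarrow> C > 0 \<Longrightarrow> clip v C = v"
  by (cases "v = 0") (auto simp: clip_def min_def field_simps)

locale dsk =
  fixes N B :: nat and f :: "nat \<Rightarrow> real^'n::finite \<Rightarrow> real" and gf :: "nat \<Rightarrow> real^'n \<Rightarrow> real^'n"
    and L G sSGD \<sigma> C \<eta> \<kappa> Fs A P :: real
  assumes N1: "N \<ge> 1" and B1: "B \<ge> 1" and sig: "\<sigma> > 0" and kap0: "0 < \<kappa>" and kap1: "\<kappa> \<le> 1"
    and eta: "\<eta> > 0" and Lnn: "L \<ge> 0" and Gnn: "G \<ge> 0" and Cpos: "C > 0"
    and grad: "\<And>i x. i < N \<Longrightarrow> GDERIV (f i) x :> gf i x"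
    and A1: "\<And>i x y. i < N \<Longrightarrow> norm (gf i x - gf i y) \<le> L * norm (x - y)"
    and A2: "\<And>x. (1 / real N) * (\<Sum>i<N. (norm (gf i x - gradF N gf x))\<^sup>2) \<le> sSGD\<^sup>2"
    and A3: "\<And>i x. i < N \<Longrightarrow> norm (gf i x) \<le> G"
    and Fs_le: "\<And>x. Fs \<le> Floss N f x"
    and C_ge: "C \<ge> (1 + 2 * (1 - \<kappa>) / \<kappa>) * G"
    and Bsig: "2 * sSGD\<^sup>2 \<le> real B * (real CARD('n) * \<sigma>\<^sup>2)"
    and Ann: "A \<ge> 0" and Acond: "(\<eta> / 2 + A) * (1 - \<kappa>)\<^sup>2 \<le> A"
    and Pdef: "P = 2 * (\<eta> / 2 + A) * L\<^sup>2" and Pcond: "P * \<eta>\<^sup>2 \<le> \<eta> / 2 - L * \<eta>\<^sup>2"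
begin

abbreviation "F \<equiv> Floss N f"
abbreviation "DF \<equiv> gradF N gf"
abbreviation "g' \<equiv> gq N gf"

definition W :: "(real^'n) \<times> (real^'n) \<times> (real^'n) \<Rightarrow> real" where
  "W st = (case st of (x, gt, dd) \<Rightarrow> F x - Fs + A * (norm (gt - DF (x - dd)))\<^sup>2 + P * (norm dd)\<^sup>2)"

lemma W_nonneg: "W st \<ge> 0"
proof -
  obtain x gt dd where st: "st = (x, gt, dd)" by (cases st) auto
  have "P \<ge> 0" using Pdef Ann eta by simp
  then show ?thesis using Fs_le[of x] Ann by (simp add: W_def st)
qed

lemma gq_bound: "norm (g' i x) \<le> G"
  using A3 Gnn by (simp add: gq_def)

lemma DF_bound: "norm (DF x) \<le> G"
proof -
  have "norm (DF x) = (1 / real N) * norm (\<Sum>i<N. gf i x)" by (simp add: gradF_def)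
  also have "\<dots> \<le> (1 / real N) * (\<Sum>i<N. norm (gf i x))" by (intro mult_left_mono norm_sum) auto
  also have "\<dots> \<le> (1 / real N) * (\<Sum>i<N. G)" by (intro mult_left_mono sum_mono A3) auto
  also have "\<dots> = G" using N1 by simp
  finally show ?thesis .
qed

lemma F_deriv: "(F has_derivative (\<lambda>h. inner h (DF x))) (at x)"
  by (rule Floss_deriv[OF grad])

lemma DF_lip: "norm (DF x - DF y) \<le> L * norm (x - y)"
  by (rule gradF_lip[OF N1 A1])

lemma F_descent: "F y \<le> F x + inner (DF x) (y - x) + L * (norm (y - x))\<^sup>2"
  by (rule descent[OF F_deriv DF_lip Lnn])

definition uu :: "real^'n \<Rightarrow> real^'n \<Rightarrow> nat \<Rightarrow> real^'n" where
  "uu x dd i = (g' i x - DF x) - (1 - \<kappa>) *\<^sub>R (g' i (x - dd) - DF (x - dd))"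

definition ee :: "(real^'n) \<times> (real^'n) \<times> (real^'n) \<Rightarrow> (nat \<Rightarrow> nat) \<times> ('n \<Rightarrow> real) \<Rightarrow> real^'n" where
  "ee st z = (case st of (x, gt, dd) \<Rightarrow>
     (1 - \<kappa>) *\<^sub>R (gt - DF (x - dd)) + (1 / real B) *\<^sub>R (\<Sum>j<B. uu x dd (fst z j)) + \<kappa> *\<^sub>R vecw (snd z))"

lemma dstep_eq:
  "dstep g' \<eta> (-1) \<kappa> C B (x, gt, dd) z =
     (x - \<eta> *\<^sub>R (DF x + ee (x, gt, dd) z), DF x + ee (x, gt, dd) z, - (\<eta> *\<^sub>R (DF x + ee (x, gt, dd) z)))"
proof -
  define a where "a = (1 - \<kappa>) / (\<kappa> * (-1))"
  have ka: "\<kappa> * a = - (1 - \<kappa>)" "\<kappa> * (1 - a) = 1" using kap0 by (simp_all add: a_def field_simps)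
  define v where "v j = a *\<^sub>R g' (fst z j) (x + (-1) *\<^sub>R dd) + (1 - a) *\<^sub>R g' (fst z j) x" for j
  have vb: "norm (v j) \<le> C" for j
  proof -
    have "norm (v j) \<le> \<bar>a\<bar> * G + \<bar>1 - a\<bar> * G"
      unfolding v_def
      by (rule order_trans[OF norm_triangle_ineq]) (auto intro!: add_mono mult_left_mono gq_bound)
    also have "\<bar>a\<bar> = (1 - \<kappa>) / \<kappa>" using kap0 kap1 by (simp add: a_def abs_if field_simps)
    also have "\<bar>1 - a\<bar> = 1 + (1 - \<kappa>) / \<kappa>" using kap0 kap1 by (simp add: a_def abs_if field_simps)
    also have "(1 - \<kappa>) / \<kappa> * G + (1 + (1 - \<kappa>) / \<kappa>) * G = (1 + 2 * (1 - \<kappa>) / \<kappa>) * G"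
      by (simp add: field_simps)
    finally show ?thesis using C_ge by simp
  qed
  have kv: "\<kappa> *\<^sub>R v j = uu x dd (fst z j) + (DF x - (1 - \<kappa>) *\<^sub>R DF (x - dd))" for j
    unfolding v_def uu_def scaleR_add_right scaleR_scaleR ka
    by (simp add: algebra_simps)
  have sumv: "\<kappa> *\<^sub>R ((1 / real B) *\<^sub>R (\<Sum>j<B. v j)) = (1 / real B) *\<^sub>R (\<Sum>j<B. uu x dd (fst z j)) + (DF x - (1 - \<kappa>) *\<^sub>R DF (x - dd))"
  proof -
    have "\<kappa> *\<^sub>R ((1 / real B) *\<^sub>R (\<Sum>j<B. v j)) = (1 / real B) *\<^sub>R (\<Sum>j<B. \<kappa> *\<^sub>R v j)"
      by (simp add: scaleR_sum_right)
    also have "\<dots> = (1 / real B) *\<^sub>R ((\<Sum>j<B. uu x dd (fst z j)) + real B *\<^sub>R (DF x - (1 - \<kappa>) *\<^sub>R DF (x - dd)))"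
      by (simp add: kv sum.distrib sum_constant_scaleR del: sum_constant)
    also have "\<dots> = (1 / real B) *\<^sub>R (\<Sum>j<B. uu x dd (fst z j)) + (DF x - (1 - \<kappa>) *\<^sub>R DF (x - dd))"
      using B1 by (simp add: scaleR_add_right)
    finally show ?thesis .
  qed
  have cl: "(\<Sum>j<B. clip (v j) C) = (\<Sum>j<B. v j)"
    using vb Cpos by (intro sum.cong refl clip_id) auto
  have gt': "(1 - \<kappa>) *\<^sub>R gt + \<kappa> *\<^sub>R ((1 / real B) *\<^sub>R (\<Sum>j<B. v j) + (\<chi> k. snd z k)) = DF x + ee (x, gt, dd) z"
    unfolding scaleR_add_right sumv ee_def by (simp add: vecw_def algebra_simps)
  show ?thesis
    unfolding dstep_def Let_def prod.case a_def[symmetric] v_def[symmetric] cl gt'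
    by simp
qed

lemma W_step:
  "W (dstep g' \<eta> (-1) \<kappa> C B (x, gt, dd) z) \<le> F x - Fs - \<eta> / 2 * (norm (DF x))\<^sup>2 + (\<eta> / 2 + A) * (norm (ee (x, gt, dd) z))\<^sup>2"
proof -
  define e where "e = ee (x, gt, dd) z"
  define v where "v = DF x + e"
  have Wn: "W (dstep g' \<eta> (-1) \<kappa> C B (x, gt, dd) z) = F (x - \<eta> *\<^sub>R v) - Fs + A * (norm e)\<^sup>2 + P * \<eta>\<^sup>2 * (norm v)\<^sup>2"
    unfolding dstep_eq e_def[symmetric] v_def[symmetric] W_def by (simp add: v_def power_mult_distrib)
  have Fd: "F (x - \<eta> *\<^sub>R v) \<le> F x - \<eta> * inner (DF x) v + L * \<eta>\<^sup>2 * (norm v)\<^sup>2"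
    using F_descent[of "x - \<eta> *\<^sub>R v" x] by (simp add: power_mult_distrib)
  have ip: "inner (DF x) v = ((norm (DF x))\<^sup>2 + (norm v)\<^sup>2 - (norm e)\<^sup>2) / 2"
    unfolding v_def by (simp add: power2_norm_eq_inner inner_add_left inner_add_right inner_commute)
  have c: "(P * \<eta>\<^sup>2 + L * \<eta>\<^sup>2 - \<eta> / 2) * (norm v)\<^sup>2 \<le> 0"
    using Pcond by (intro mult_nonpos_nonneg) auto
  then have c': "P * \<eta>\<^sup>2 * (norm v)\<^sup>2 + L * \<eta>\<^sup>2 * (norm v)\<^sup>2 \<le> \<eta> / 2 * (norm v)\<^sup>2"
    by (simp add: algebra_simps)
  have e2: "\<eta> * inner (DF x) v = \<eta> / 2 * (norm (DF x))\<^sup>2 + \<eta> / 2 * (norm v)\<^sup>2 - \<eta> / 2 * (norm e)\<^sup>2"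
    unfolding ip by (simp add: field_simps)
  have d: "(\<eta> / 2 + A) * (norm e)\<^sup>2 = \<eta> / 2 * (norm e)\<^sup>2 + A * (norm e)\<^sup>2" by (simp add: distrib_right)
  show ?thesis unfolding Wn e_def[symmetric] using Fd e2 c' d by linarith
qed

end


lemma sq_sum_le: "(norm (a + b :: 'a::real_inner))\<^sup>2 \<le> 2 * (norm a)\<^sup>2 + 2 * (norm b)\<^sup>2"
proof -
  have "(norm (a + b))\<^sup>2 \<le> (norm a + norm b)\<^sup>2" by (simp add: norm_triangle_ineq power_mono)
  also have "\<dots> \<le> 2 * (norm a)\<^sup>2 + 2 * (norm b)\<^sup>2"
  proof -
    have "0 \<le> (norm a - norm b)\<^sup>2" by simp
    then show ?thesis by (simp add: power2_eq_square algebra_simps)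
  qed
  finally show ?thesis .
qed

context dsk begin

lemma DF_avg: "(\<Sum>i<N. gf i y) = real N *\<^sub>R DF y"
  using N1 by (simp add: gradF_def)

lemma uu_sum: "(\<Sum>i<N. uu x dd i) = 0"
proof -
  have "(\<Sum>i<N. uu x dd i) = ((\<Sum>i<N. gf i x) - real N *\<^sub>R DF x) - (1 - \<kappa>) *\<^sub>R ((\<Sum>i<N. gf i (x - dd)) - real N *\<^sub>R DF (x - dd))"
    by (simp add: uu_def gq_def sum_subtractf scaleR_sum_right[symmetric] sum_constant_scaleR del: sum_constant)
  then show ?thesis by (simp add: DF_avg)
qed

lemma uu_bound: "norm (uu x dd i) \<le> 4 * G"
proof -
  have "norm (uu x dd i) \<le> norm (g' i x - DF x) + norm ((1 - \<kappa>) *\<^sub>R (g' i (x - dd) - DF (x - dd)))"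
    unfolding uu_def by (rule norm_triangle_ineq4)
  also have "norm (g' i x - DF x) \<le> 2 * G"
    using norm_triangle_ineq4[of "g' i x" "DF x"] gq_bound[of i x] DF_bound[of x] by simp
  also have "norm ((1 - \<kappa>) *\<^sub>R (g' i (x - dd) - DF (x - dd))) \<le> 1 * (2 * G)"
  proof -
    have "norm (g' i (x - dd) - DF (x - dd)) \<le> 2 * G"
      using norm_triangle_ineq4[of "g' i (x - dd)" "DF (x - dd)"] gq_bound[of i "x - dd"] DF_bound[of "x - dd"] by simp
    moreover have "norm ((1 - \<kappa>) *\<^sub>R (g' i (x - dd) - DF (x - dd))) = (1 - \<kappa>) * norm (g' i (x - dd) - DF (x - dd))"
      using kap1 by simp
    moreover have "(1 - \<kappa>) * norm (g' i (x - dd) - DF (x - dd)) \<le> norm (g' i (x - dd) - DF (x - dd))"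
      using kap0 kap1 by (intro mult_left_le_one_le) auto
    ultimately show ?thesis by linarith
  qed
  finally show ?thesis by simp
qed

lemma uu_m2: "(\<Sum>i<N. (norm (uu x dd i))\<^sup>2) / real N \<le> 2 * \<kappa>\<^sup>2 * sSGD\<^sup>2 + 2 * (1 - \<kappa>)\<^sup>2 * L\<^sup>2 * (norm dd)\<^sup>2"
proof -
  define y where "y i = gf i x - gf i (x - dd)" for i
  have ybar: "(1 / real N) *\<^sub>R (\<Sum>k<N. y k) = DF x - DF (x - dd)"
    using N1 by (simp add: y_def sum_subtractf DF_avg scaleR_diff_right)
  have ui: "uu x dd i = \<kappa> *\<^sub>R (gf i x - DF x) + (1 - \<kappa>) *\<^sub>R (y i - (1 / real N) *\<^sub>R (\<Sum>k<N. y k))" if "i < N" for i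
    using that unfolding ybar by (simp add: uu_def gq_def y_def algebra_simps)
  have "(\<Sum>i<N. (norm (uu x dd i))\<^sup>2) \<le> (\<Sum>i<N. 2 * \<kappa>\<^sup>2 * (norm (gf i x - DF x))\<^sup>2 + 2 * (1 - \<kappa>)\<^sup>2 * (norm (y i - (1 / real N) *\<^sub>R (\<Sum>k<N. y k)))\<^sup>2)"
  proof (intro sum_mono)
    fix i assume "i \<in> {..<N}"
    then show "(norm (uu x dd i))\<^sup>2 \<le> 2 * \<kappa>\<^sup>2 * (norm (gf i x - DF x))\<^sup>2 + 2 * (1 - \<kappa>)\<^sup>2 * (norm (y i - (1 / real N) *\<^sub>R (\<Sum>k<N. y k)))\<^sup>2"
      using ui sq_sum_le[of "\<kappa> *\<^sub>R (gf i x - DF x)" "(1 - \<kappa>) *\<^sub>R (y i - (1 / real N) *\<^sub>R (\<Sum>k<N. y k))"]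
      by (simp add: power_mult_distrib)
  qed
  also have "\<dots> = 2 * \<kappa>\<^sup>2 * (\<Sum>i<N. (norm (gf i x - DF x))\<^sup>2) + 2 * (1 - \<kappa>)\<^sup>2 * (\<Sum>i<N. (norm (y i - (1 / real N) *\<^sub>R (\<Sum>k<N. y k)))\<^sup>2)"
    by (simp add: sum.distrib sum_distrib_left)
  also have "\<dots> \<le> 2 * \<kappa>\<^sup>2 * (real N * sSGD\<^sup>2) + 2 * (1 - \<kappa>)\<^sup>2 * (real N * (L\<^sup>2 * (norm dd)\<^sup>2))"
  proof (intro add_mono mult_left_mono)
    show "(\<Sum>i<N. (norm (gf i x - DF x))\<^sup>2) \<le> real N * sSGD\<^sup>2"
      using A2[of x] N1 by (simp add: field_simps)
    have "(\<Sum>i<N. (norm (y i - (1 / real N) *\<^sub>R (\<Sum>k<N. y k)))\<^sup>2) \<le> (\<Sum>i<N. (norm (y i))\<^sup>2)"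
      by (rule var_le[OF N1])
    also have "\<dots> \<le> (\<Sum>i<N. L\<^sup>2 * (norm dd)\<^sup>2)"
    proof (intro sum_mono)
      fix i assume "i \<in> {..<N}"
      then have "norm (y i) \<le> L * norm dd" using A1[of i x "x - dd"] by (simp add: y_def)
      then have "(norm (y i))\<^sup>2 \<le> (L * norm dd)\<^sup>2" by (intro power_mono) auto
      then show "(norm (y i))\<^sup>2 \<le> L\<^sup>2 * (norm dd)\<^sup>2" by (simp add: power_mult_distrib)
    qed
    finally show "(\<Sum>i<N. (norm (y i - (1 / real N) *\<^sub>R (\<Sum>k<N. y k)))\<^sup>2) \<le> real N * (L\<^sup>2 * (norm dd)\<^sup>2)" by simp
  qed auto
  finally show ?thesis using N1 by (simp add: field_simps)
qed

end


lemma gauss_prob: "\<sigma> > 0 \<Longrightarrow> prob_space (gauss_space \<sigma> :: ('n::finite \<Rightarrow> real) measure)"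
  unfolding gauss_space_def by (rule prob_space_PiM) (simp add: NM_prob)

lemma batch_prob: "N \<ge> 1 \<Longrightarrow> prob_space (batch_space N B)"
  unfolding batch_space_def by (rule prob_space_PiM) (auto intro: prob_space_measure_pmf)

context dsk begin

lemma exp_step:
  fixes x gt dd :: "real^'n"
  defines "e \<equiv> gt - DF (x - dd)" and "R \<equiv> F x - Fs - \<eta> / 2 * (norm (DF x))\<^sup>2" and "c \<equiv> \<eta> / 2 + A"
    and "m2 \<equiv> (\<Sum>i<N. (norm (uu x dd i))\<^sup>2) / real N"
  shows "(\<integral>\<^sup>+z. ennreal (W (dstep g' \<eta> (-1) \<kappa> C B (x, gt, dd) z)) \<partial>(step_space N B \<sigma>))
          \<le> ennreal (R + c * ((1 - \<kappa>)\<^sup>2 * (norm e)\<^sup>2 + m2 / real B + \<kappa>\<^sup>2 * real CARD('n) * \<sigma>\<^sup>2))"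
    and "0 \<le> R + c * ((1 - \<kappa>)\<^sup>2 * (norm e)\<^sup>2 + m2 / real B + \<kappa>\<^sup>2 * real CARD('n) * \<sigma>\<^sup>2)"
proof -
  let ?BM = "batch_space N B" and ?GM = "gauss_space \<sigma> :: ('n \<Rightarrow> real) measure"
  define Eb where "Eb b = (1 - \<kappa>) *\<^sub>R e + (1 / real B) *\<^sub>R (\<Sum>j\<in>{..<B}. uu x dd (b j))" for b :: "nat \<Rightarrow> nat"
  define Q where "Q z = R + c * (norm (Eb (fst z) + \<kappa> *\<^sub>R vecw (snd z)))\<^sup>2" for z :: "(nat \<Rightarrow> nat) \<times> ('n \<Rightarrow> real)"
  have ee_eq: "ee (x, gt, dd) z = Eb (fst z) + \<kappa> *\<^sub>R vecw (snd z)" for z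
    by (simp add: ee_def e_def Eb_def)
  have WQ: "W (dstep g' \<eta> (-1) \<kappa> C B (x, gt, dd) z) \<le> Q z" for z
    using W_step[of x gt dd z] unfolding Q_def ee_eq R_def c_def by simp
  have Qnn: "0 \<le> Q z" for z using WQ[of z] W_nonneg[of "dstep g' \<eta> (-1) \<kappa> C B (x, gt, dd) z"] by simp
  have GP: "prob_space ?GM" by (rule gauss_prob[OF sig])
  have BP: "prob_space ?BM" by (rule batch_prob[OF N1])
  have GPS: "measure ?GM (space ?GM) = 1" using prob_space.prob_space[OF GP] .
  have BPS: "measure ?BM (space ?BM) = 1" using prob_space.prob_space[OF BP] .
  have mu: "(\<lambda>z. uu x dd (fst z j)) \<in> borel_measurable (step_space N B \<sigma> :: ((nat \<Rightarrow> nat) \<times> ('n \<Rightarrow> real)) measure)" if "j < B" for j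
    by (rule measurable_compose[OF bat_meas[OF measurable_ident_sets[OF refl] that]]) simp
  have mv: "(\<lambda>z. vecw (snd z)) \<in> borel_measurable (step_space N B \<sigma> :: ((nat \<Rightarrow> nat) \<times> ('n \<Rightarrow> real)) measure)"
    unfolding step_space_def by (rule measurable_compose[OF measurable_snd vecw_meas])
  have mQ: "(\<lambda>z. ennreal (Q z)) \<in> borel_measurable (?BM \<Otimes>\<^sub>M ?GM)"
  proof -
    have "(\<lambda>z. \<Sum>j\<in>{..<B}. uu x dd (fst z j)) \<in> borel_measurable (step_space N B \<sigma> :: ((nat \<Rightarrow> nat) \<times> ('n \<Rightarrow> real)) measure)"
      using mu by (intro borel_measurable_sum) auto
    then have "(\<lambda>z. ennreal (Q z)) \<in> borel_measurable (step_space N B \<sigma> :: ((nat \<Rightarrow> nat) \<times> ('n \<Rightarrow> real)) measure)"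
      unfolding Q_def Eb_def using mv by measurable
    then show ?thesis by (simp add: step_space_def)
  qed
  have inner: "(\<integral>\<^sup>+w. ennreal (Q (b, w)) \<partial>?GM) = ennreal (R + c * ((norm (Eb b))\<^sup>2 + \<kappa>\<^sup>2 * real CARD('n) * \<sigma>\<^sup>2))"
    and innn: "0 \<le> R + c * ((norm (Eb b))\<^sup>2 + \<kappa>\<^sup>2 * real CARD('n) * \<sigma>\<^sup>2)" for b
  proof -
    have int: "integrable ?GM (\<lambda>w. Q (b, w))"
      unfolding Q_def using gauss_norm(1)[OF sig, of "Eb b" \<kappa>] finite_measure.integrable_const[OF prob_fin[OF GP]]
      by (auto intro!: Bochner_Integration.integrable_add Bochner_Integration.integrable_mult_right)
    have val: "integral\<^sup>L ?GM (\<lambda>w. Q (b, w)) = R + c * ((norm (Eb b))\<^sup>2 + \<kappa>\<^sup>2 * real CARD('n) * \<sigma>\<^sup>2)"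
      unfolding Q_def using gauss_norm[OF sig, of "Eb b" \<kappa>] finite_measure.integrable_const[OF prob_fin[OF GP]] GPS
      by (subst Bochner_Integration.integral_add) (auto simp: lebesgue_integral_const)
    show "(\<integral>\<^sup>+w. ennreal (Q (b, w)) \<partial>?GM) = ennreal (R + c * ((norm (Eb b))\<^sup>2 + \<kappa>\<^sup>2 * real CARD('n) * \<sigma>\<^sup>2))"
      using nn_integral_eq_integral[OF int] Qnn val by simp
    show "0 \<le> R + c * ((norm (Eb b))\<^sup>2 + \<kappa>\<^sup>2 * real CARD('n) * \<sigma>\<^sup>2)"
      using Bochner_Integration.integral_nonneg[of ?GM "\<lambda>w. Q (b, w)"] Qnn val by simp
  qed
  have bn: "integrable ?BM (\<lambda>b. (norm (Eb b))\<^sup>2)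
       \<and> integral\<^sup>L ?BM (\<lambda>b. (norm (Eb b))\<^sup>2) = (norm ((1 - \<kappa>) *\<^sub>R e))\<^sup>2 + (1 / real B)\<^sup>2 * real (card {..<B}) * m2"
    unfolding Eb_def batch_space_def m2_def
    by (rule batch_norm[OF N1 finite_lessThan uu_sum uu_bound])
  have bnv: "(norm ((1 - \<kappa>) *\<^sub>R e))\<^sup>2 + (1 / real B)\<^sup>2 * real (card {..<B}) * m2 = (1 - \<kappa>)\<^sup>2 * (norm e)\<^sup>2 + m2 / real B"
  proof -
    have "(norm ((1 - \<kappa>) *\<^sub>R e))\<^sup>2 = (1 - \<kappa>)\<^sup>2 * (norm e)\<^sup>2" by (simp add: power_mult_distrib)
    moreover have "(1 / real B)\<^sup>2 * real (card {..<B}) * m2 = m2 / real B" using B1 by (simp add: power2_eq_square)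
    ultimately show ?thesis by simp
  qed
  have oint: "integrable ?BM (\<lambda>b. R + c * ((norm (Eb b))\<^sup>2 + \<kappa>\<^sup>2 * real CARD('n) * \<sigma>\<^sup>2))"
    using bn finite_measure.integrable_const[OF prob_fin[OF BP]]
    by (auto intro!: Bochner_Integration.integrable_add Bochner_Integration.integrable_mult_right)
  have oval: "integral\<^sup>L ?BM (\<lambda>b. R + c * ((norm (Eb b))\<^sup>2 + \<kappa>\<^sup>2 * real CARD('n) * \<sigma>\<^sup>2))
      = R + c * ((1 - \<kappa>)\<^sup>2 * (norm e)\<^sup>2 + m2 / real B + \<kappa>\<^sup>2 * real CARD('n) * \<sigma>\<^sup>2)"
  proof -
    have fe: "(\<lambda>b. R + c * ((norm (Eb b))\<^sup>2 + \<kappa>\<^sup>2 * real CARD('n) * \<sigma>\<^sup>2)) = (\<lambda>b. (R + c * (\<kappa>\<^sup>2 * real CARD('n) * \<sigma>\<^sup>2)) + c * (norm (Eb b))\<^sup>2)"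
      by (auto simp: algebra_simps)
    have "integral\<^sup>L ?BM (\<lambda>b. (R + c * (\<kappa>\<^sup>2 * real CARD('n) * \<sigma>\<^sup>2)) + c * (norm (Eb b))\<^sup>2)
        = (R + c * (\<kappa>\<^sup>2 * real CARD('n) * \<sigma>\<^sup>2)) + c * integral\<^sup>L ?BM (\<lambda>b. (norm (Eb b))\<^sup>2)"
      using bn finite_measure.integrable_const[OF prob_fin[OF BP]] BPS
      by (subst Bochner_Integration.integral_add) (auto simp: lebesgue_integral_const)
    moreover have I2: "integral\<^sup>L ?BM (\<lambda>b. (norm (Eb b))\<^sup>2) = (1 - \<kappa>)\<^sup>2 * (norm e)\<^sup>2 + m2 / real B"
      using bn[unfolded bnv] by blast
    ultimately show ?thesis unfolding fe by (simp only: I2) (simp add: algebra_simps)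
  qed
  have "(\<integral>\<^sup>+z. ennreal (W (dstep g' \<eta> (-1) \<kappa> C B (x, gt, dd) z)) \<partial>(step_space N B \<sigma>))
      \<le> (\<integral>\<^sup>+z. ennreal (Q z) \<partial>(step_space N B \<sigma>))"
    by (intro nn_integral_mono ennreal_leI WQ)
  also have "\<dots> = (\<integral>\<^sup>+b. (\<integral>\<^sup>+w. ennreal (Q (b, w)) \<partial>?GM) \<partial>?BM)"
    unfolding step_space_def
    using sigma_finite_measure.nn_integral_fst[OF prob_space_imp_sigma_finite[OF GP] mQ] by simp
  also have "\<dots> = (\<integral>\<^sup>+b. ennreal (R + c * ((norm (Eb b))\<^sup>2 + \<kappa>\<^sup>2 * real CARD('n) * \<sigma>\<^sup>2)) \<partial>?BM)"
    by (simp add: inner)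
  also have "\<dots> = ennreal (R + c * ((1 - \<kappa>)\<^sup>2 * (norm e)\<^sup>2 + m2 / real B + \<kappa>\<^sup>2 * real CARD('n) * \<sigma>\<^sup>2))"
    using nn_integral_eq_integral[OF oint] innn oval by simp
  finally show "(\<integral>\<^sup>+z. ennreal (W (dstep g' \<eta> (-1) \<kappa> C B (x, gt, dd) z)) \<partial>(step_space N B \<sigma>))
          \<le> ennreal (R + c * ((1 - \<kappa>)\<^sup>2 * (norm e)\<^sup>2 + m2 / real B + \<kappa>\<^sup>2 * real CARD('n) * \<sigma>\<^sup>2))" .
  show "0 \<le> R + c * ((1 - \<kappa>)\<^sup>2 * (norm e)\<^sup>2 + m2 / real B + \<kappa>\<^sup>2 * real CARD('n) * \<sigma>\<^sup>2)"
    using Bochner_Integration.integral_nonneg[of ?BM "\<lambda>b. R + c * ((norm (Eb b))\<^sup>2 + \<kappa>\<^sup>2 * real CARD('n) * \<sigma>\<^sup>2)"] innn oval by simp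
qed

end


context dsk begin

definition "K = 2 * (\<eta> / 2 + A) * \<kappa>\<^sup>2 * real CARD('n) * \<sigma>\<^sup>2"

lemma one_step:
  "(\<integral>\<^sup>+z. ennreal (W (dstep g' \<eta> (-1) \<kappa> C B st z)) \<partial>(step_space N B \<sigma>)) + ennreal (\<eta> / 2 * (norm (DF (fst st)))\<^sup>2)
     \<le> ennreal (W st + K)"
proof -
  obtain x gt dd where st: "st = (x, gt, dd)" by (cases st) auto
  define e where "e = gt - DF (x - dd)"
  define c where "c = \<eta> / 2 + A"
  define m2 where "m2 = (\<Sum>i<N. (norm (uu x dd i))\<^sup>2) / real N"
  define d where "d = real CARD('n)"
  define V where "V = F x - Fs - \<eta> / 2 * (norm (DF x))\<^sup>2 + c * ((1 - \<kappa>)\<^sup>2 * (norm e)\<^sup>2 + m2 / real B + \<kappa>\<^sup>2 * d * \<sigma>\<^sup>2)"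
  have E1: "(\<integral>\<^sup>+z. ennreal (W (dstep g' \<eta> (-1) \<kappa> C B (x, gt, dd) z)) \<partial>(step_space N B \<sigma>)) \<le> ennreal V"
    and V0: "0 \<le> V"
    using exp_step[of x gt dd] unfolding V_def c_def e_def m2_def d_def by auto
  have c0: "c \<ge> 0" using Ann eta by (simp add: c_def)
  have hA: "c * ((1 - \<kappa>)\<^sup>2 * (norm e)\<^sup>2) \<le> A * (norm e)\<^sup>2"
    using mult_right_mono[OF Acond, of "(norm e)\<^sup>2"] by (simp add: c_def algebra_simps)
  have hm: "m2 / real B \<le> \<kappa>\<^sup>2 * d * \<sigma>\<^sup>2 + 2 * L\<^sup>2 * (norm dd)\<^sup>2"
  proof -
    have "m2 / real B \<le> (2 * \<kappa>\<^sup>2 * sSGD\<^sup>2 + 2 * (1 - \<kappa>)\<^sup>2 * L\<^sup>2 * (norm dd)\<^sup>2) / real B"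
      using divide_right_mono[OF uu_m2[of x dd], of "real B"] B1 unfolding m2_def by simp
    also have "\<dots> = \<kappa>\<^sup>2 * (2 * sSGD\<^sup>2 / real B) + (2 * (1 - \<kappa>)\<^sup>2 * L\<^sup>2 * (norm dd)\<^sup>2) / real B"
      by (simp add: add_divide_distrib)
    also have "\<kappa>\<^sup>2 * (2 * sSGD\<^sup>2 / real B) \<le> \<kappa>\<^sup>2 * (d * \<sigma>\<^sup>2)"
      using Bsig B1 by (intro mult_left_mono) (auto simp: d_def field_simps)
    also have "(2 * (1 - \<kappa>)\<^sup>2 * L\<^sup>2 * (norm dd)\<^sup>2) / real B \<le> 2 * (1 - \<kappa>)\<^sup>2 * L\<^sup>2 * (norm dd)\<^sup>2"
      using divide_left_mono[of 1 "real B" "2 * (1 - \<kappa>)\<^sup>2 * L\<^sup>2 * (norm dd)\<^sup>2"] B1 by simp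
    also have "2 * (1 - \<kappa>)\<^sup>2 * L\<^sup>2 * (norm dd)\<^sup>2 \<le> 2 * 1 * L\<^sup>2 * (norm dd)\<^sup>2"
    proof -
      have "(1 - \<kappa>)\<^sup>2 \<le> 1" using kap0 kap1 by (simp add: power_le_one)
      then show ?thesis by (intro mult_right_mono) auto
    qed
    finally show ?thesis by (simp add: algebra_simps)
  qed
  have "V \<le> F x - Fs - \<eta> / 2 * (norm (DF x))\<^sup>2 + A * (norm e)\<^sup>2 + c * (\<kappa>\<^sup>2 * d * \<sigma>\<^sup>2 + 2 * L\<^sup>2 * (norm dd)\<^sup>2) + c * (\<kappa>\<^sup>2 * d * \<sigma>\<^sup>2)"
    using hA mult_left_mono[OF hm c0] unfolding V_def distrib_left by linarith
  also have "\<dots> = W st + K - \<eta> / 2 * (norm (DF x))\<^sup>2"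
    by (simp only: W_def st prod.case) (simp add: e_def K_def Pdef c_def d_def algebra_simps)
  finally have Vb: "V + \<eta> / 2 * (norm (DF x))\<^sup>2 \<le> W st + K" by simp
  have g0: "0 \<le> \<eta> / 2 * (norm (DF x))\<^sup>2" using eta by simp
  have "(\<integral>\<^sup>+z. ennreal (W (dstep g' \<eta> (-1) \<kappa> C B st z)) \<partial>(step_space N B \<sigma>)) + ennreal (\<eta> / 2 * (norm (DF (fst st)))\<^sup>2)
        \<le> ennreal V + ennreal (\<eta> / 2 * (norm (DF x))\<^sup>2)"
    using E1 by (simp add: st add_right_mono)
  also have "\<dots> = ennreal (V + \<eta> / 2 * (norm (DF x))\<^sup>2)" using V0 g0 by (simp add: ennreal_plus)
  also have "\<dots> \<le> ennreal (W st + K)" using Vb by (rule ennreal_leI)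
  finally show ?thesis .
qed

end


context dsk begin

lemma gq_meas: "g' i \<in> borel_measurable borel"
proof (cases "i < N")
  case True
  have "continuous_on UNIV (gf i)"
  proof (rule lipschitz_on_continuous_on)
    show "L-lipschitz_on UNIV (gf i)"
      by (rule lipschitz_onI) (use A1[OF True] Lnn in \<open>auto simp: dist_norm\<close>)
  qed
  then have "gf i \<in> borel_measurable borel" by (rule borel_measurable_continuous_onI)
  moreover have "g' i = gf i" by (rule ext) (simp add: gq_def True)
  ultimately show ?thesis by simp
next
  case False
  have "g' i = (\<lambda>_. 0)" by (rule ext) (simp add: gq_def False)
  then show ?thesis by simp
qed

lemma F_meas: "F \<in> borel_measurable borel"
proof -
  have "continuous_on UNIV F"
    using F_deriv by (intro continuous_at_imp_continuous_on) (auto intro: has_derivative_continuous)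
  then show ?thesis by (rule borel_measurable_continuous_onI)
qed

lemma DF_meas: "DF \<in> borel_measurable borel"
proof -
  have "continuous_on UNIV DF"
    by (rule lipschitz_on_continuous_on[of L], rule lipschitz_onI) (use DF_lip Lnn in \<open>auto simp: dist_norm\<close>)
  then show ?thesis by (rule borel_measurable_continuous_onI)
qed

abbreviation "\<Omega> \<equiv> (omega_space N B \<sigma> :: (nat \<Rightarrow> (nat \<Rightarrow> nat) \<times> ('n \<Rightarrow> real)) measure)"
abbreviation "rn st \<omega> t \<equiv> run g' \<eta> (-1) \<kappa> C B st \<omega> t"
definition hh :: "(real^'n) \<times> (real^'n) \<times> (real^'n) \<Rightarrow> real" where "hh st = \<eta> / 2 * (norm (DF (fst st)))\<^sup>2"

lemma W_comp_meas:
  assumes X: "x \<in> borel_measurable M" "gt \<in> borel_measurable M" "dd \<in> borel_measurable M"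
  shows "(\<lambda>\<omega>. W (x \<omega>, gt \<omega>, dd \<omega>)) \<in> borel_measurable M"
    and "(\<lambda>\<omega>. hh (x \<omega>, gt \<omega>, dd \<omega>)) \<in> borel_measurable M"
proof -
  have "(\<lambda>\<omega>. F (x \<omega>)) \<in> borel_measurable M" by (rule measurable_compose[OF X(1) F_meas])
  moreover have "(\<lambda>\<omega>. DF (x \<omega> - dd \<omega>)) \<in> borel_measurable M"
    by (rule measurable_compose[OF _ DF_meas]) (use X in measurable)
  moreover have "(\<lambda>\<omega>. DF (x \<omega>)) \<in> borel_measurable M" by (rule measurable_compose[OF X(1) DF_meas])
  ultimately show "(\<lambda>\<omega>. W (x \<omega>, gt \<omega>, dd \<omega>)) \<in> borel_measurable M"
    and "(\<lambda>\<omega>. hh (x \<omega>, gt \<omega>, dd \<omega>)) \<in> borel_measurable M"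
    unfolding W_def hh_def using X by (simp_all, measurable)
qed

lemma run_W_meas: "(\<lambda>\<omega>. W (rn st \<omega> t)) \<in> borel_measurable \<Omega>" and run_hh_meas: "(\<lambda>\<omega>. hh (rn st \<omega> t)) \<in> borel_measurable \<Omega>"
proof -
  have m: "(\<lambda>\<omega>. fst (rn st \<omega> t)) \<in> borel_measurable \<Omega>
       \<and> (\<lambda>\<omega>. fst (snd (rn st \<omega> t))) \<in> borel_measurable \<Omega>
       \<and> (\<lambda>\<omega>. snd (snd (rn st \<omega> t))) \<in> borel_measurable \<Omega>"
    by (rule run_meas) (rule gq_meas)
  show "(\<lambda>\<omega>. W (rn st \<omega> t)) \<in> borel_measurable \<Omega>"
    using W_comp_meas(1)[OF m[THEN conjunct1] m[THEN conjunct2, THEN conjunct1] m[THEN conjunct2, THEN conjunct2]] by simp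
  show "(\<lambda>\<omega>. hh (rn st \<omega> t)) \<in> borel_measurable \<Omega>"
    using W_comp_meas(2)[OF m[THEN conjunct1] m[THEN conjunct2, THEN conjunct1] m[THEN conjunct2, THEN conjunct2]] by simp
qed

lemma Omega_prob: "prob_space \<Omega>"
  unfolding omega_space_def by (rule prob_space_PiM) (use step_prob[OF sig N1] in auto)

lemma dstep_W_meas: "(\<lambda>z. W (dstep g' \<eta> (-1) \<kappa> C B st z)) \<in> borel_measurable (step_space N B \<sigma> :: ((nat \<Rightarrow> nat) \<times> ('n \<Rightarrow> real)) measure)"
proof -
  obtain x gt dd where st: "st = (x, gt, dd)" by (cases st) auto
  have Z: "(\<lambda>z. z) \<in> measurable (step_space N B \<sigma> :: ((nat \<Rightarrow> nat) \<times> ('n \<Rightarrow> real)) measure) (step_space N B \<sigma>)" by simp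
  note D = dstep_meas[where gf="gq N gf" and x="\<lambda>_. x" and gt="\<lambda>_. gt" and dd="\<lambda>_. dd" and \<eta>=\<eta> and \<gamma>="-1" and \<kappa>=\<kappa> and C=C, OF gq_meas measurable_const measurable_const measurable_const Z]
  show ?thesis using W_comp_meas(1)[OF D] by (simp add: st)
qed

end


context dsk begin

lemma main_ind:
  "(\<integral>\<^sup>+\<omega>. ennreal (W (rn st \<omega> n)) + (\<Sum>t<n. ennreal (hh (rn st \<omega> t))) \<partial>\<Omega>) \<le> ennreal (W st + real n * K)"
proof (induction n arbitrary: st)
  case 0
  show ?case using prob_space.emeasure_space_1[OF Omega_prob] by simp
next
  case (Suc n)
  have PS: "prob_space (step_space N B \<sigma> :: ((nat \<Rightarrow> nat) \<times> ('n \<Rightarrow> real)) measure)" by (rule step_prob[OF sig N1])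
  have K0: "K \<ge> 0" using Ann eta by (simp add: K_def)
  define H where "H \<omega> = ennreal (W (rn st \<omega> (Suc n))) + (\<Sum>t<Suc n. ennreal (hh (rn st \<omega> t)))" for \<omega>
  have Hm: "H \<in> borel_measurable \<Omega>"
    unfolding H_def using run_W_meas run_hh_meas by measurable
  have HC: "H (case_nat z \<omega>) = ennreal (hh st) + (ennreal (W (rn (dstep g' \<eta> (-1) \<kappa> C B st z) \<omega> n))
              + (\<Sum>t<n. ennreal (hh (rn (dstep g' \<eta> (-1) \<kappa> C B st z) \<omega> t))))" for z \<omega>
    unfolding H_def sum.lessThan_Suc_shift run_case_nat by (simp add: add_ac)
  have "(\<integral>\<^sup>+\<omega>. H \<omega> \<partial>\<Omega>) = (\<integral>\<^sup>+z. (\<integral>\<^sup>+\<omega>. H (case_nat z \<omega>) \<partial>\<Omega>) \<partial>(step_space N B \<sigma>))"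
    unfolding omega_space_def by (rule omega_split[OF PS]) (use Hm in \<open>simp add: omega_space_def\<close>)
  also have "\<dots> \<le> (\<integral>\<^sup>+z. ennreal (hh st) + ennreal (W (dstep g' \<eta> (-1) \<kappa> C B st z) + real n * K) \<partial>(step_space N B \<sigma>))"
  proof (intro nn_integral_mono)
    fix z
    have "(\<integral>\<^sup>+\<omega>. H (case_nat z \<omega>) \<partial>\<Omega>) = ennreal (hh st) * emeasure \<Omega> (space \<Omega>) + (\<integral>\<^sup>+\<omega>. ennreal (W (rn (dstep g' \<eta> (-1) \<kappa> C B st z) \<omega> n))
              + (\<Sum>t<n. ennreal (hh (rn (dstep g' \<eta> (-1) \<kappa> C B st z) \<omega> t))) \<partial>\<Omega>)"
      unfolding HC using run_W_meas run_hh_meas by (subst nn_integral_add) (auto intro!: borel_measurable_sum)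
    also have "\<dots> \<le> ennreal (hh st) + ennreal (W (dstep g' \<eta> (-1) \<kappa> C B st z) + real n * K)"
      using Suc.IH[of "dstep g' \<eta> (-1) \<kappa> C B st z"] prob_space.emeasure_space_1[OF Omega_prob]
      by (simp add: add_left_mono)
    finally show "(\<integral>\<^sup>+\<omega>. H (case_nat z \<omega>) \<partial>\<Omega>) \<le> ennreal (hh st) + ennreal (W (dstep g' \<eta> (-1) \<kappa> C B st z) + real n * K)" .
  qed
  also have "\<dots> = ennreal (hh st) + (\<integral>\<^sup>+z. ennreal (W (dstep g' \<eta> (-1) \<kappa> C B st z)) \<partial>(step_space N B \<sigma>)) + ennreal (real n * K)"
  proof -
    have "(\<integral>\<^sup>+z. ennreal (hh st) + ennreal (W (dstep g' \<eta> (-1) \<kappa> C B st z) + real n * K) \<partial>(step_space N B \<sigma>))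
        = (\<integral>\<^sup>+z. ennreal (hh st) + (ennreal (W (dstep g' \<eta> (-1) \<kappa> C B st z)) + ennreal (real n * K)) \<partial>(step_space N B \<sigma>))"
      using W_nonneg K0 by (intro nn_integral_cong) (simp add: ennreal_plus)
    also have "\<dots> = ennreal (hh st) + ((\<integral>\<^sup>+z. ennreal (W (dstep g' \<eta> (-1) \<kappa> C B st z)) \<partial>(step_space N B \<sigma>)) + ennreal (real n * K))"
      using dstep_W_meas prob_space.emeasure_space_1[OF PS]
      by (simp add: nn_integral_add)
    finally show ?thesis by (simp add: add_ac)
  qed
  also have "\<dots> \<le> ennreal (W st + K) + ennreal (real n * K)"
    using one_step[of st] by (simp add: hh_def add_ac add_right_mono)
  also have "\<dots> = ennreal (W st + real (Suc n) * K)"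
  proof -
    have "ennreal (W st + K) + ennreal (real n * K) = ennreal (W st + K + real n * K)"
      using W_nonneg[of st] K0 by (intro ennreal_plus[symmetric]) auto
    also have "W st + K + real n * K = W st + real (Suc n) * K" by (simp add: algebra_simps)
    finally show ?thesis .
  qed
  finally show ?case unfolding H_def .
qed


end


lemma dstep_valid:
  assumes "\<forall>j<B. fst z j < N"
  shows "dstep gf \<eta> \<gamma> \<kappa> C B s z = dstep (gq N gf) \<eta> \<gamma> \<kappa> C B s z"
proof -
  have "(\<Sum>j<B. clip (a *\<^sub>R gf (fst z j) y1 + (1 - a) *\<^sub>R gf (fst z j) y2) C)
      = (\<Sum>j<B. clip (a *\<^sub>R gq N gf (fst z j) y1 + (1 - a) *\<^sub>R gq N gf (fst z j) y2) C)" for a y1 y2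
    using assms by (intro sum.cong refl) (simp add: gq_def)
  then show ?thesis unfolding dstep_def Let_def by (simp add: split_beta)
qed

lemma run_valid:
  assumes "\<forall>t. \<forall>j<B. fst (\<omega> t) j < N"
  shows "run gf \<eta> \<gamma> \<kappa> C B st \<omega> t = run (gq N gf) \<eta> \<gamma> \<kappa> C B st \<omega> t"
  using assms by (induction t) (simp_all add: dstep_valid)

lemma AE_valid:
  assumes N1: "N \<ge> 1" and sig: "\<sigma> > 0"
  shows "AE \<omega> in (omega_space N B \<sigma> :: (nat \<Rightarrow> (nat \<Rightarrow> nat) \<times> ('n::finite \<Rightarrow> real)) measure). \<forall>t. \<forall>j<B. fst (\<omega> t) j < N"
proof -
  let ?S = "step_space N B \<sigma> :: ((nat \<Rightarrow> nat) \<times> ('n \<Rightarrow> real)) measure"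
  have PS: "prob_space ?S" by (rule step_prob[OF sig N1])
  have S1: "AE z in ?S. fst z j < N" if j: "j < B" for j
  proof -
    have GP: "prob_space (gauss_space \<sigma> :: ('n \<Rightarrow> real) measure)" by (rule gauss_prob[OF sig])
    have BP: "prob_space (batch_space N B)" by (rule batch_prob[OF N1])
    interpret PSF: pair_sigma_finite "batch_space N B" "gauss_space \<sigma> :: ('n \<Rightarrow> real) measure"
      unfolding pair_sigma_finite_def using GP BP by (auto intro: prob_space_imp_sigma_finite)
    have AB: "AE b in batch_space N B. b j < N"
      unfolding batch_space_def
    proof (rule AE_PiM_component)
      show "AE x in measure_pmf (UP N). x < N" using N1 by (auto simp: AE_measure_pmf_iff lessThan_empty_iff)
    qed (use j in \<open>auto intro: prob_space_measure_pmf\<close>)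
    have meas: "{z \<in> space ?S. fst z j < N} \<in> sets ?S"
    proof -
      have "(\<lambda>z. fst z j) \<in> measurable ?S (count_space UNIV)"
        by (rule bat_meas[OF measurable_ident_sets[OF refl] j])
      from measurable_sets[OF this, of "{..<N}"] show ?thesis
        by (simp add: vimage_def Int_def conj_commute)
    qed
    show ?thesis unfolding step_space_def
      by (rule PSF.AE_pair_measure) (use meas AB in \<open>auto simp: step_space_def\<close>)
  qed
  show ?thesis
    unfolding omega_space_def
  proof (subst AE_all_countable, intro allI)
    fix t
    show "AE \<omega> in PiM UNIV (\<lambda>_. ?S). \<forall>j<B. fst (\<omega> t) j < N"
    proof (subst AE_all_countable, intro allI)
      fix j
      show "AE \<omega> in PiM UNIV (\<lambda>_. ?S). j < B \<longrightarrow> fst (\<omega> t) j < N"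
      proof (cases "j < B")
        case True
        have "AE \<omega> in PiM UNIV (\<lambda>_. ?S). fst (\<omega> t) j < N"
          by (rule AE_PiM_component) (use PS S1[OF True] in auto)
        then show ?thesis by eventually_elim simp
      qed simp
    qed
  qed
qed

context dsk begin

lemma sum_bound:
  "(\<Sum>t<n. integral\<^sup>L \<Omega> (\<lambda>\<omega>. (norm (DF (fst (rn st \<omega> t))))\<^sup>2)) \<le> 2 / \<eta> * (W st + real n * K)"
proof -
  define q where "q t \<omega> = hh (rn st \<omega> t)" for t \<omega>
  have K0: "K \<ge> 0" using Ann eta by (simp add: K_def)
  have q0: "0 \<le> q t \<omega>" for t \<omega> using eta by (simp add: q_def hh_def)
  have qb: "norm (q t \<omega>) \<le> \<eta> / 2 * G\<^sup>2" for t \<omega>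
  proof -
    have "(norm (DF (fst (rn st \<omega> t))))\<^sup>2 \<le> G\<^sup>2" using DF_bound by (intro power_mono) auto
    then show ?thesis using q0[of t \<omega>] eta by (simp add: q_def hh_def)
  qed
  have qm: "q t \<in> borel_measurable \<Omega>" for t unfolding q_def by (rule run_hh_meas)
  have qi: "integrable \<Omega> (q t)" for t
    by (rule finite_measure.integrable_const_bound[OF prob_fin[OF Omega_prob], where B="\<eta> / 2 * G\<^sup>2"]) (use qb qm in auto)
  have nn: "(\<integral>\<^sup>+\<omega>. ennreal (q t \<omega>) \<partial>\<Omega>) = ennreal (integral\<^sup>L \<Omega> (q t))" for t
    using nn_integral_eq_integral[OF qi] q0 by simp
  have "ennreal (\<Sum>t<n. integral\<^sup>L \<Omega> (q t)) = (\<Sum>t<n. ennreal (integral\<^sup>L \<Omega> (q t)))"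
    using q0 by (intro sum_ennreal[symmetric] integral_nonneg_AE) auto
  also have "\<dots> = (\<integral>\<^sup>+\<omega>. (\<Sum>t<n. ennreal (q t \<omega>)) \<partial>\<Omega>)"
    using qm by (subst nn_integral_sum) (auto simp: nn)
  also have "\<dots> \<le> (\<integral>\<^sup>+\<omega>. ennreal (W (rn st \<omega> n)) + (\<Sum>t<n. ennreal (hh (rn st \<omega> t))) \<partial>\<Omega>)"
    by (intro nn_integral_mono) (simp add: q_def)
  also have "\<dots> \<le> ennreal (W st + real n * K)" by (rule main_ind)
  finally have "(\<Sum>t<n. integral\<^sup>L \<Omega> (q t)) \<le> W st + real n * K"
    using W_nonneg[of st] K0 by (subst (asm) ennreal_le_iff) auto
  moreover have "integral\<^sup>L \<Omega> (q t) = \<eta> / 2 * integral\<^sup>L \<Omega> (\<lambda>\<omega>. (norm (DF (fst (rn st \<omega> t))))\<^sup>2)" for t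
    unfolding q_def hh_def by simp
  ultimately have "\<eta> / 2 * (\<Sum>t<n. integral\<^sup>L \<Omega> (\<lambda>\<omega>. (norm (DF (fst (rn st \<omega> t))))\<^sup>2)) \<le> W st + real n * K"
    by (simp add: sum_distrib_left)
  then show ?thesis using eta by (simp add: field_simps)
qed

end



lemma final_arith:
  fixes L Dl g0 Mk \<eta> \<kappa> D T :: real
  assumes L: "L > 0" and Dl: "Dl > 0" and g0: "g0 = 2 * Mk * L * Dl" and Mk0: "0 < Mk" and Mk1: "Mk \<le> 1"
    and T: "T \<ge> 1" and D: "D > 0"
    and eta: "\<eta> = min (1 / (L * (2 + 4 / Mk - Mk))) (1 / (Mk * L) * sqrt ((2 * Mk * L * Dl + g0) / (2 * T * D)))"
    and kap: "\<kappa> = Mk * L * \<eta>"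
    and Tge: "T \<ge> (2 * L * Dl * (16 / Mk ^ 3 + 16 / Mk\<^sup>2 - 4 / Mk - 4) + g0) / D"
  shows "(1 / T) * (2 / \<eta>) * (Dl + \<eta> / (4 * \<kappa>) * g0 + (T + 1) * (2 * (\<eta> / 2 + \<eta> / (4 * \<kappa>)) * \<kappa>\<^sup>2 * D))
         \<le> 8 * sqrt (Mk * L * Dl * D / T)"
proof -
  define c where "c = 2 + 4 / Mk - Mk"
  have c4: "c \<ge> 4 / Mk" using Mk1 by (simp add: c_def)
  have c0: "c > 0"
  proof -
    have "0 < 4 / Mk" using Mk0 by simp
    then show ?thesis using c4 by linarith
  qed
  define e1 where "e1 = 1 / (L * c)"
  define S where "S = sqrt (g0 * D / T)"
  have T0: "T > 0" using T by simp
  have g00: "g0 > 0" using g0 Mk0 L Dl by simp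
  have S0: "S > 0" unfolding S_def using g00 D T0 by simp
  have arg: "(2 * Mk * L * Dl + g0) / (2 * T * D) = g0 / (T * D)" using g0 T0 D by (simp add: field_simps)
  define e2 where "e2 = sqrt (g0 / (T * D)) / (Mk * L)"
  have eta': "\<eta> = min e1 e2" unfolding eta e1_def e2_def c_def arg by simp
  have e10: "e1 > 0" unfolding e1_def using L c0 by simp
  have e20: "e2 > 0" unfolding e2_def using g00 T0 D Mk0 L by simp
  have eta0: "\<eta> > 0" using eta' e10 e20 by simp
  have kap0: "\<kappa> > 0" unfolding kap using Mk0 L eta0 by simp
  have Le1: "L * e1 \<le> Mk / 4"
  proof -
    have "L * e1 = 1 / c" unfolding e1_def using L by simp
    also have "\<dots> \<le> 1 / (4 / Mk)" using c4 Mk0 c0 by (intro divide_left_mono) (auto intro!: divide_pos_pos mult_pos_pos)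
    finally show ?thesis by simp
  qed
  have kap14: "\<kappa> \<le> 1 / 4"
  proof -
    have "\<kappa> \<le> Mk * (L * e1)" unfolding kap eta' using Mk0 L by (simp add: mult_left_mono)
    also have "\<dots> \<le> Mk * (Mk / 4)" using Le1 Mk0 by (intro mult_left_mono) auto
    also have "\<dots> \<le> 1 * (1 / 4)" using Mk0 Mk1 by (intro mult_mono) auto
    finally show ?thesis by simp
  qed
  have Ag: "\<eta> / (4 * \<kappa>) * g0 = Dl / 2"
    unfolding kap g0 using eta0 Mk0 L by (simp add: field_simps)
  have Kt: "(2 / \<eta>) * (2 * (\<eta> / 2 + \<eta> / (4 * \<kappa>)) * \<kappa>\<^sup>2 * D) = (2 * \<kappa>\<^sup>2 + \<kappa>) * D"
    using eta0 kap0 by (simp add: field_simps power2_eq_square)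
  have LHS: "(1 / T) * (2 / \<eta>) * (Dl + \<eta> / (4 * \<kappa>) * g0 + (T + 1) * (2 * (\<eta> / 2 + \<eta> / (4 * \<kappa>)) * \<kappa>\<^sup>2 * D))
      = 3 * (Dl / (\<eta> * T)) + ((T + 1) / T) * ((2 * \<kappa>\<^sup>2 + \<kappa>) * D)"
    unfolding Ag using eta0 T0 kap0 by (simp add: field_simps power2_eq_square)
  have t2: "((T + 1) / T) * ((2 * \<kappa>\<^sup>2 + \<kappa>) * D) \<le> 3 * (\<kappa> * D)"
  proof -
    have "(T + 1) / T \<le> 2" using T0 T by (simp add: field_simps)
    moreover have "2 * \<kappa>\<^sup>2 + \<kappa> \<le> 3 / 2 * \<kappa>" using kap14 kap0 by (simp add: power2_eq_square)
    ultimately have "((T + 1) / T) * ((2 * \<kappa>\<^sup>2 + \<kappa>) * D) \<le> 2 * ((3 / 2 * \<kappa>) * D)"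
      using D kap0 T0 by (intro mult_mono) (auto intro!: mult_right_mono)
    then show ?thesis by (simp add: mult.commute)
  qed
  have kD: "\<kappa> * D \<le> S"
  proof -
    have "\<kappa> \<le> Mk * L * e2" unfolding kap eta' using Mk0 L by (simp add: mult_left_mono)
    also have "\<dots> = sqrt (g0 / (T * D))" unfolding e2_def using Mk0 L by simp
    finally have "\<kappa> * D \<le> sqrt (g0 / (T * D)) * D" using D by (simp add: mult_right_mono)
    also have "\<dots> = sqrt (g0 / (T * D)) * sqrt (D * D)" using D by simp
    also have "\<dots> = sqrt (g0 / (T * D) * (D * D))" by (simp only: real_sqrt_mult)
    also have "g0 / (T * D) * (D * D) = g0 * D / T" using D T0 by (simp add: field_simps)
    finally show ?thesis unfolding S_def .
  qed
  have dT: "Dl / (\<eta> * T) \<le> S / 2"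
  proof (rule power2_le_imp_le)
    show "0 \<le> S / 2" using S0 by simp
    have S2: "S\<^sup>2 = g0 * D / T" unfolding S_def using g00 D T0 by simp
    show "(Dl / (\<eta> * T))\<^sup>2 \<le> (S / 2)\<^sup>2"
    proof (cases "e1 \<le> e2")
      case True
      then have he: "\<eta> = e1" using eta' by simp
      have "(Dl / (\<eta> * T))\<^sup>2 = Dl\<^sup>2 * L\<^sup>2 * c\<^sup>2 / T\<^sup>2" unfolding he e1_def using L c0 T0 by (simp add: field_simps power2_eq_square)
      also have "\<dots> \<le> (S / 2)\<^sup>2"
      proof -
        have cc: "c\<^sup>2 / Mk = 16 / Mk ^ 3 + 16 / Mk\<^sup>2 - 4 / Mk - 4 + Mk"
          unfolding c_def using Mk0 by (simp add: field_simps power2_eq_square power3_eq_cube)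
        have "T * D \<ge> 2 * L * Dl * (16 / Mk ^ 3 + 16 / Mk\<^sup>2 - 4 / Mk - 4) + g0"
          using Tge D by (simp add: field_simps)
        also have "2 * L * Dl * (16 / Mk ^ 3 + 16 / Mk\<^sup>2 - 4 / Mk - 4) + g0 = 2 * L * Dl * (c\<^sup>2 / Mk)"
          unfolding cc g0 by (simp add: algebra_simps)
        finally have TD: "2 * L * Dl * (c\<^sup>2 / Mk) \<le> T * D" .
        have "Dl\<^sup>2 * L\<^sup>2 * c\<^sup>2 / T\<^sup>2 = (L * Dl / (2 * T\<^sup>2)) * (2 * L * Dl * (c\<^sup>2 / Mk)) * Mk"
          using Mk0 by (simp add: field_simps power2_eq_square)
        also have "\<dots> \<le> (L * Dl / (2 * T\<^sup>2)) * (T * D) * Mk"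
          using TD L Dl T0 Mk0 by (intro mult_right_mono mult_left_mono) auto
        also have "\<dots> = (S / 2)\<^sup>2"
          unfolding power_divide S2 g0 using T0 by (simp add: field_simps power2_eq_square)
        finally show ?thesis .
      qed
      finally show ?thesis .
    next
      case False
      then have he: "\<eta> = e2" using eta' by simp
      have "(Dl / (\<eta> * T))\<^sup>2 = Dl\<^sup>2 * (Mk * L)\<^sup>2 / ((g0 / (T * D)) * T\<^sup>2)"
        unfolding he e2_def using Mk0 L g00 T0 D by (simp add: power_divide power_mult_distrib field_simps)
      also have "\<dots> = (S / 2)\<^sup>2"
        unfolding power_divide S2 g0 using T0 D Mk0 L Dl by (simp add: field_simps power2_eq_square)
      finally show ?thesis by simp
    qed
  qed
  have "(1 / T) * (2 / \<eta>) * (Dl + \<eta> / (4 * \<kappa>) * g0 + (T + 1) * (2 * (\<eta> / 2 + \<eta> / (4 * \<kappa>)) * \<kappa>\<^sup>2 * D))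
      \<le> 9 / 2 * S"
    unfolding LHS using t2 kD dT by linarith
  also have "\<dots> \<le> 8 * sqrt (Mk * L * Dl * D / T)"
  proof -
    have "9 / 2 * S / 8 \<le> sqrt (Mk * L * Dl * D / T)"
    proof (rule real_le_rsqrt)
      have "(9 / 2 * S / 8)\<^sup>2 = 81 / 256 * (g0 * D / T)" unfolding S_def using g00 D T0 by (simp add: power_divide power_mult_distrib)
      also have "\<dots> = 81 / 128 * (Mk * L * Dl * D / T)" unfolding g0 by (simp add: field_simps)
      also have "\<dots> \<le> Mk * L * Dl * D / T"
      proof -
        define Y where "Y = Mk * L * Dl * D / T"
        have "0 \<le> Y" using Mk0 L Dl D T0 by (simp add: Y_def)
        then have "81 / 128 * Y \<le> Y" by linarith
        then show ?thesis unfolding Y_def .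
      qed
      finally show "(9 / 2 * S / 8)\<^sup>2 \<le> Mk * L * Dl * D / T" .
    qed
    then show ?thesis by simp
  qed
  finally show ?thesis .
qed



lemma param_arith:
  fixes L Mk \<eta> \<kappa> :: real
  assumes L: "L > 0" and Mk0: "Mk > 0" and Mk1: "Mk \<le> 1" and eta0: "\<eta> > 0"
    and kap: "\<kappa> = Mk * L * \<eta>" and e1: "\<eta> \<le> 1 / (L * (2 + 4 / Mk - Mk))"
  shows "\<kappa> \<le> 1 / 4" "(\<eta> / 2 + \<eta> / (4 * \<kappa>)) * (1 - \<kappa>)\<^sup>2 \<le> \<eta> / (4 * \<kappa>)"
    "2 * (\<eta> / 2 + \<eta> / (4 * \<kappa>)) * L\<^sup>2 * \<eta>\<^sup>2 \<le> \<eta> / 2 - L * \<eta>\<^sup>2"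
proof -
  define c where "c = 2 + 4 / Mk - Mk"
  have c4: "c \<ge> 4 / Mk" using Mk1 by (simp add: c_def)
  have c0: "c > 0"
  proof -
    have "0 < 4 / Mk" using Mk0 by simp
    then show ?thesis using c4 by linarith
  qed
  define u where "u = L * \<eta>"
  have u0: "u > 0" using L eta0 by (simp add: u_def)
  have uM: "u \<le> Mk / 4"
  proof -
    have "u \<le> L * (1 / (L * c))" unfolding u_def using mult_left_mono[OF e1, of L] L by (simp add: c_def)
    also have "\<dots> = 1 / c" using L by simp
    also have "\<dots> \<le> 1 / (4 / Mk)" using c4 Mk0 c0 by (intro divide_left_mono) (auto intro!: divide_pos_pos mult_pos_pos)
    finally show ?thesis by simp
  qed
  have u14: "u \<le> 1 / 4" using uM Mk1 by simp
  have kapu: "\<kappa> = Mk * u" by (simp add: kap u_def)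
  have kap0: "\<kappa> > 0" using kapu Mk0 u0 by simp
  show k14: "\<kappa> \<le> 1 / 4"
  proof -
    have "\<kappa> \<le> 1 * (1 / 4)" unfolding kapu using Mk1 u14 u0 by (intro mult_mono) auto
    then show ?thesis by simp
  qed
  have "(\<eta> / 2 + \<eta> / (4 * \<kappa>)) * (1 - \<kappa>)\<^sup>2 = \<eta> / (4 * \<kappa>) * ((2 * \<kappa> + 1) * (1 - \<kappa>)\<^sup>2)"
    using kap0 by (simp add: field_simps)
  also have "\<dots> \<le> \<eta> / (4 * \<kappa>) * 1"
  proof (intro mult_left_mono)
    have "(2 * \<kappa> + 1) * (1 - \<kappa>)\<^sup>2 = 1 - \<kappa>\<^sup>2 * (3 - 2 * \<kappa>)" by (simp add: power2_eq_square algebra_simps)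
    moreover have "\<kappa>\<^sup>2 * (3 - 2 * \<kappa>) \<ge> 0" using k14 by simp
    ultimately show "(2 * \<kappa> + 1) * (1 - \<kappa>)\<^sup>2 \<le> 1" by simp
  qed (use eta0 kap0 in simp)
  finally show "(\<eta> / 2 + \<eta> / (4 * \<kappa>)) * (1 - \<kappa>)\<^sup>2 \<le> \<eta> / (4 * \<kappa>)" by simp
  have "2 * (\<eta> / 2 + \<eta> / (4 * \<kappa>)) * L\<^sup>2 * \<eta>\<^sup>2 + L * \<eta>\<^sup>2 = \<eta> * (u\<^sup>2 + u / (2 * Mk) + u)"
    unfolding kapu u_def using Mk0 L eta0 by (simp add: field_simps power2_eq_square)
  also have "\<dots> \<le> \<eta> * (1 / 16 + 1 / 8 + 1 / 4)"
  proof (intro mult_left_mono add_mono)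
    show "u\<^sup>2 \<le> 1 / 16" using u14 u0 power_mono[of u "1/4" 2] by (simp add: power2_eq_square)
    show "u / (2 * Mk) \<le> 1 / 8" using uM Mk0 by (simp add: field_simps)
  qed (use u14 eta0 in auto)
  also have "\<dots> \<le> \<eta> / 2" using eta0 by simp
  finally show "2 * (\<eta> / 2 + \<eta> / (4 * \<kappa>)) * L\<^sup>2 * \<eta>\<^sup>2 \<le> \<eta> / 2 - L * \<eta>\<^sup>2" by simp
qed


theorem corollary1:
  fixes N B T :: nat
    and f :: "nat \<Rightarrow> real^'n::finite \<Rightarrow> real"
    and gf :: "nat \<Rightarrow> real^'n \<Rightarrow> real^'n"
    and x0 :: "real^'n"
    and L G \<sigma>SGD \<sigma>DP C \<eta> \<kappa> \<beta> Mk M1 :: real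
  defines "F \<equiv> Floss N f" and "Fs \<equiv> Fstar N f" and "d \<equiv> real CARD('n)"
  assumes N_pos: "N \<ge> 1"
    and grad: "\<And>i x. i < N \<Longrightarrow> GDERIV (f i) x :> gf i x"
    and bdd: "bdd_below (range F)"
    and gap: "F x0 > Fs"
    and A1: "\<And>i x y. i < N \<Longrightarrow> norm (gf i x - gf i y) \<le> L * norm (x - y)"
    and A2: "\<And>x. (1 / real N) * (\<Sum>i<N. (norm (gf i x - gradF N gf x))\<^sup>2) \<le> \<sigma>SGD\<^sup>2"
    and A3: "\<And>i x. i < N \<Longrightarrow> norm (gf i x) \<le> G"
    and sigDP: "\<sigma>DP > 0"
    and kap_range: "0 < \<kappa>" "\<kappa> \<le> 1"
    and C_pos: "C > 0"
    and C_ge: "C \<ge> (1 + 2 * (1 - \<kappa>) / \<kappa>) * G"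
    and Mk_def: "Mk = (norm (gradF N gf x0))\<^sup>2 / (2 * L * (F x0 - Fs))"
    and Mk_le: "Mk \<le> 1"
    and eta_def: "\<eta> = min (1 / (L * (2 + 4 / Mk - Mk)))
        (1 / (Mk * L) * sqrt ((2 * Mk * L * (F x0 - Fs) + (norm (gradF N gf x0))\<^sup>2)
                               / (2 * real T * d * \<sigma>DP\<^sup>2)))"
    and kap_def: "\<kappa> = Mk * L * \<eta>"
    and beta_def: "\<beta> = (\<eta> * (1 - \<kappa>) / 2 + \<eta>\<^sup>2 * L * (1 - \<kappa>)\<^sup>2 * (1 + 4 * \<eta>\<^sup>2 * L\<^sup>2))
                    / (1 - (1 - \<kappa>)\<^sup>2 * (1 + 4 * \<eta>\<^sup>2 * L\<^sup>2))"
    and beta_le: "\<beta> \<le> 1 / (2 * Mk * L)"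
    and B_ge: "real B \<ge> max 1 (2 * \<sigma>SGD\<^sup>2 / (d * \<sigma>DP\<^sup>2))"
    and cond1: "\<eta> < (1 + \<kappa>) / (2 * L * (1 + 4 * (1 - \<kappa>)\<^sup>2 * \<beta> * L))"
    and cond2: "\<kappa> > 1 - 1 / sqrt (1 + 4 * \<eta>\<^sup>2 * L\<^sup>2)"
    and M1_def: "M1 = (1 + \<kappa> - 2 * \<eta> * L) - 8 * (\<beta> + \<eta>\<^sup>2 * L) * (1 - \<kappa>)\<^sup>2 * L\<^sup>2 * \<eta>"
    and M1_pos: "M1 > 0"
    and T_ge: "real T \<ge> (2 * L * (F x0 - Fs) * (16 / Mk ^ 3 + 16 / Mk\<^sup>2 - 4 / Mk - 4)
                          + (norm (gradF N gf x0))\<^sup>2) / (d * \<sigma>DP\<^sup>2)"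
  shows "(1 / real T) * (\<Sum>t\<le>T. integral\<^sup>L (omega_space N B \<sigma>DP)
            (\<lambda>\<omega>. (norm (gradF N gf (disk_x gf x0 \<eta> (-1) \<kappa> C B \<omega> t)))\<^sup>2))
         \<le> 8 * sqrt (Mk * L * (F x0 - Fs) * d * \<sigma>DP\<^sup>2 / real T)"
proof -
  note A1' = A1
  have N0: "0 < N" using N_pos by simp
  have Fs_le: "Fs \<le> F x" for x
    unfolding Fs_def F_def Fstar_def using bdd unfolding F_def by (intro cInf_lower) auto
  have L0: "L \<ge> 0"
  proof (rule ccontr)
    assume nL: "\<not> L \<ge> 0"
    have h: "norm (gf 0 1 - gf 0 0) \<le> L * norm (1 - 0 :: real^'n)" by (rule A1) (use N0 in simp)
    have n1: "norm (1 :: real^'n) > 0" by simp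
    have "L * norm (1 :: real^'n) < 0" using nL n1 by (simp add: mult_neg_pos)
    then show False using h norm_ge_zero[of "gf 0 1 - gf 0 0"] by simp
  qed
  have G0: "G \<ge> 0" using A3[OF N0, of x0] norm_ge_zero[of "gf 0 x0"] by linarith
  define Dl where "Dl = F x0 - Fs"
  define g0 where "g0 = (norm (gradF N gf x0))\<^sup>2"
  have Dl0: "Dl > 0" using gap by (simp add: Dl_def)
  have g0nn: "g0 \<ge> 0" by (simp add: g0_def)
  have Mk_def': "Mk = g0 / (2 * L * Dl)" using Mk_def by (simp add: g0_def Dl_def)
  have Lpos: "L > 0"
  proof (rule ccontr)
    assume "\<not> L > 0"
    then have "L = 0" using L0 by simp
    then have "\<kappa> = 0" using kap_def by simp
    then show False using kap_range by simp
  qed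
  have Mk_nn: "Mk \<ge> 0" using Mk_def' g0nn Lpos Dl0 by simp
  have Mk0: "Mk > 0"
  proof (rule ccontr)
    assume "\<not> Mk > 0" then have "Mk = 0" using Mk_nn by simp
    then show False using kap_def kap_range by simp
  qed
  have eta0: "\<eta> > 0"
  proof -
    have "0 < Mk * L * \<eta>" using kap_def kap_range by simp
    then show ?thesis using mult_pos_pos[OF Mk0 Lpos] by (rule zero_less_mult_pos[of "Mk * L"])
  qed
  have g0eq: "g0 = 2 * Mk * L * Dl" using Mk_def' Lpos Dl0 by (simp add: field_simps)
  have Tpos: "T \<ge> 1"
  proof (rule ccontr)
    assume "\<not> T \<ge> 1" then have "T = 0" by simp
    then have "\<eta> \<le> 0" using eta_def by simp
    then show False using eta0 by simp
  qed
  have d0: "d > 0" by (simp add: d_def)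
  have s20: "\<sigma>DP\<^sup>2 > 0" using sigDP by simp
  have eta_le1: "\<eta> \<le> 1 / (L * (2 + 4 / Mk - Mk))" using eta_def by simp
  note PA = param_arith[OF Lpos Mk0 Mk_le eta0 kap_def eta_le1]
  define A where "A = \<eta> / (4 * \<kappa>)"
  define P where "P = 2 * (\<eta> / 2 + A) * L\<^sup>2"
  have B1: "B \<ge> 1" using B_ge by simp
  have Bsig: "2 * \<sigma>SGD\<^sup>2 \<le> real B * (real CARD('n) * \<sigma>DP\<^sup>2)"
  proof -
    have "2 * \<sigma>SGD\<^sup>2 / (d * \<sigma>DP\<^sup>2) \<le> real B" using B_ge by simp
    then show ?thesis using d0 s20 by (simp add: d_def field_simps)
  qed
  have Ann: "A \<ge> 0" using eta0 kap_range by (simp add: A_def)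
  have Acond: "(\<eta> / 2 + A) * (1 - \<kappa>)\<^sup>2 \<le> A" using PA(2) by (simp add: A_def)
  have Pcond: "P * \<eta>\<^sup>2 \<le> \<eta> / 2 - L * \<eta>\<^sup>2" using PA(3) by (simp add: P_def A_def)
  have Fs_le': "\<And>x. Fs \<le> Floss N f x" using Fs_le by (simp add: F_def)
  have Bn: "N \<ge> 1" by (rule N_pos)
  interpret D: dsk N B f gf L G \<sigma>SGD \<sigma>DP C \<eta> \<kappa> Fs A P
    by (rule dsk.intro[OF Bn B1 sigDP kap_range(1) kap_range(2) eta0 L0 G0 C_pos grad A1 A2 A3 Fs_le' C_ge Bsig Ann Acond P_def Pcond])
  define st0 :: "(real^'n) \<times> (real^'n) \<times> (real^'n)" where "st0 = (x0, 0, 0)"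
  have SB: "(\<Sum>t<Suc T. integral\<^sup>L (omega_space N B \<sigma>DP) (\<lambda>\<omega>. (norm (gradF N gf (fst (run (gq N gf) \<eta> (-1) \<kappa> C B st0 \<omega> t))))\<^sup>2))
       \<le> 2 / \<eta> * (D.W st0 + real (Suc T) * D.K)"
    by (rule D.sum_bound)
  have cmp: "integral\<^sup>L (omega_space N B \<sigma>DP) (\<lambda>\<omega>. (norm (gradF N gf (disk_x gf x0 \<eta> (-1) \<kappa> C B \<omega> t)))\<^sup>2)
      \<le> integral\<^sup>L (omega_space N B \<sigma>DP) (\<lambda>\<omega>. (norm (gradF N gf (fst (run (gq N gf) \<eta> (-1) \<kappa> C B st0 \<omega> t))))\<^sup>2)" for t
  proof -
    let ?O = "omega_space N B \<sigma>DP :: (nat \<Rightarrow> (nat \<Rightarrow> nat) \<times> ('n \<Rightarrow> real)) measure"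
    define f1 where "f1 = (\<lambda>\<omega>. (norm (gradF N gf (disk_x gf x0 \<eta> (-1) \<kappa> C B \<omega> t)))\<^sup>2)"
    define f2 where "f2 = (\<lambda>\<omega>. (norm (gradF N gf (fst (run (gq N gf) \<eta> (-1) \<kappa> C B st0 \<omega> t))))\<^sup>2)"
    have ae: "AE \<omega> in ?O. f1 \<omega> = f2 \<omega>"
      using AE_valid[OF N_pos sigDP, where B=B and 'n='n]
    proof eventually_elim
      case (elim \<omega>)
      then have "run gf \<eta> (-1) \<kappa> C B st0 \<omega> t = run (gq N gf) \<eta> (-1) \<kappa> C B st0 \<omega> t"
        by (rule run_valid)
      then show ?case by (simp add: f1_def f2_def disk_x_def disk_state_run st0_def)
    qed
    have f2m: "f2 \<in> borel_measurable ?O"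
    proof -
      have "(\<lambda>\<omega>. D.hh (run (gq N gf) \<eta> (-1) \<kappa> C B st0 \<omega> t)) \<in> borel_measurable ?O" by (rule D.run_hh_meas)
      then have "(\<lambda>\<omega>. 2 / \<eta> * D.hh (run (gq N gf) \<eta> (-1) \<kappa> C B st0 \<omega> t)) \<in> borel_measurable ?O" by measurable
      moreover have "(\<lambda>\<omega>. 2 / \<eta> * D.hh (run (gq N gf) \<eta> (-1) \<kappa> C B st0 \<omega> t)) = f2"
        using eta0 by (auto simp: D.hh_def f2_def)
      ultimately show ?thesis by simp
    qed
    have f2nn: "0 \<le> integral\<^sup>L ?O f2" by (intro integral_nonneg_AE) (simp add: f2_def)
    show ?thesis
    proof (cases "integrable ?O f1")
      case True
      then have "integral\<^sup>L ?O f1 = integral\<^sup>L ?O f2"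
        using ae f2m by (intro integral_cong_AE) auto
      then show ?thesis by (simp add: f1_def f2_def)
    next
      case False
      then have "integral\<^sup>L ?O f1 = 0" by (rule not_integrable_integral_eq)
      then show ?thesis using f2nn by (simp add: f1_def f2_def)
    qed
  qed
  have S1: "(\<Sum>t\<le>T. integral\<^sup>L (omega_space N B \<sigma>DP) (\<lambda>\<omega>. (norm (gradF N gf (disk_x gf x0 \<eta> (-1) \<kappa> C B \<omega> t)))\<^sup>2))
      \<le> 2 / \<eta> * (D.W st0 + real (Suc T) * D.K)"
    using order_trans[OF sum_mono[OF cmp] SB] by (simp add: lessThan_Suc_atMost)
  have W0: "D.W st0 = Dl + A * g0"
    by (simp add: D.W_def st0_def Dl_def g0_def F_def)
  have K0: "D.K = 2 * (\<eta> / 2 + A) * \<kappa>\<^sup>2 * (d * \<sigma>DP\<^sup>2)"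
    by (simp add: D.K_def d_def)
  have FA: "(1 / real T) * (2 / \<eta>) * (Dl + \<eta> / (4 * \<kappa>) * g0 + (real T + 1) * (2 * (\<eta> / 2 + \<eta> / (4 * \<kappa>)) * \<kappa>\<^sup>2 * (d * \<sigma>DP\<^sup>2)))
         \<le> 8 * sqrt (Mk * L * Dl * (d * \<sigma>DP\<^sup>2) / real T)"
  proof (rule final_arith[OF Lpos Dl0 g0eq Mk0 Mk_le])
    show "1 \<le> real T" using Tpos by simp
    show "0 < d * \<sigma>DP\<^sup>2" using d0 s20 by simp
    show "\<eta> = min (1 / (L * (2 + 4 / Mk - Mk))) (1 / (Mk * L) * sqrt ((2 * Mk * L * Dl + g0) / (2 * real T * (d * \<sigma>DP\<^sup>2))))"
      using eta_def by (simp add: Dl_def g0_def mult.assoc)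
    show "\<kappa> = Mk * L * \<eta>" by (rule kap_def)
    show "(2 * L * Dl * (16 / Mk ^ 3 + 16 / Mk\<^sup>2 - 4 / Mk - 4) + g0) / (d * \<sigma>DP\<^sup>2) \<le> real T"
      using T_ge by (simp add: Dl_def g0_def)
  qed
  have "(1 / real T) * (\<Sum>t\<le>T. integral\<^sup>L (omega_space N B \<sigma>DP) (\<lambda>\<omega>. (norm (gradF N gf (disk_x gf x0 \<eta> (-1) \<kappa> C B \<omega> t)))\<^sup>2))
      \<le> (1 / real T) * (2 / \<eta> * (D.W st0 + real (Suc T) * D.K))"
    using S1 Tpos by (intro mult_left_mono) auto
  also have "\<dots> = (1 / real T) * (2 / \<eta>) * (Dl + \<eta> / (4 * \<kappa>) * g0 + (real T + 1) * (2 * (\<eta> / 2 + \<eta> / (4 * \<kappa>)) * \<kappa>\<^sup>2 * (d * \<sigma>DP\<^sup>2)))"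
    by (simp only: W0 K0) (simp add: A_def algebra_simps)
  also have "\<dots> \<le> 8 * sqrt (Mk * L * Dl * (d * \<sigma>DP\<^sup>2) / real T)" by (rule FA)
  also have "\<dots> = 8 * sqrt (Mk * L * (F x0 - Fs) * d * \<sigma>DP\<^sup>2 / real T)"
    by (simp add: Dl_def mult.assoc)
  finally show ?thesis .
qed


end
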